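(* Let $(W,S)$ be a Coxeter group. Let $(s,t)\in\mathfrak{M}$ and $(u,v)\in\mathfrak{N}$, and let $q\in W$. Assume that $u\in qD_{s,t}q^{-1}$ and $v\in qD_{s,t}q^{-1}$. Then $m_{s,t}=m_{u,v}$.
   Context: $(W,S)$ is a Coxeter group (generators $S$, relations $(st)^{m_{s,t}}=1$ for $m_{s,t}<\infty$, $m_{s,s}=1$, $m_{s,t}=m_{t,s}\ge2$ for $s\neq t$). $\mathfrak{M}=\{(s,t)\in S\times S: s\ne t,\ m_{s,t}<\infty\}$; $\mathfrak{N}=\bigcup_{x\in W}\{(xsx^{-1},xtx^{-1}):(s,t)\in\mathfrak{M}\}$. For elements $u,v$ of $W$, $m_{u,v}$ denotes the order of $uv$; $D_{s,t}$ is the subgroup of $W$ generated by $s$ and $t$. *)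

theory Defs
  imports "HOL-Algebra.Algebra" "HOL-Library.Extended_Nat"
begin

definition elem_order :: "('w, 'x) monoid_scheme \<Rightarrow> 'w \<Rightarrow> enat" where
  "elem_order G x =
     (if \<exists>n::nat. n > 0 \<and> x [^]\<^bsub>G\<^esub> n = \<one>\<^bsub>G\<^esub> then enat (group.ord G x) else \<infinity>)"

definition coxeter_matrix :: "'w set \<Rightarrow> ('w \<Rightarrow> 'w \<Rightarrow> enat) \<Rightarrow> bool" where
  "coxeter_matrix S m \<longleftrightarrow>
     (\<forall>s\<in>S. m s s = 1) \<and>
     (\<forall>s\<in>S. \<forall>t\<in>S. m s t = m t s) \<and>
     (\<forall>s\<in>S. \<forall>t\<in>S. s \<noteq> t \<longrightarrow> m s t \<ge> 2)"

definition coxeter_relations_hold ::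
    "('h, 'y) monoid_scheme \<Rightarrow> 'w set \<Rightarrow> ('w \<Rightarrow> 'w \<Rightarrow> enat) \<Rightarrow> ('w \<Rightarrow> 'h) \<Rightarrow> bool" where
  "coxeter_relations_hold H S m f \<longleftrightarrow>
     (\<forall>s\<in>S. \<forall>t\<in>S. m s t \<noteq> \<infinity> \<longrightarrow>
        (f s \<otimes>\<^bsub>H\<^esub> f t) [^]\<^bsub>H\<^esub> (the_enat (m s t)) = \<one>\<^bsub>H\<^esub>)"

(* (G, S) is a Coxeter system with Coxeter matrix m, i.e. G has the presentation
   < S | (st)^{m s t} = 1, m s t < \<infinity> >:
   G is a group generated by S \<subseteq> G, the relations hold in G, and G has the universal
   property of the presented group: every assignment of S into a group H satisfying the
   relations extends to a homomorphism G \<rightarrow> H.  (Uniqueness is automatic since S generates G.)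
   The universal property is quantified over groups whose carrier has type 'w list; this is
   no restriction since the subgroup of H generated by f ` S has cardinality at most that
   of the words over S, so it embeds (isomorphically) into such a group. *)
definition coxeter_system :: "('w, 'x) monoid_scheme \<Rightarrow> 'w set \<Rightarrow> ('w \<Rightarrow> 'w \<Rightarrow> enat) \<Rightarrow> bool" where
  "coxeter_system G S m \<longleftrightarrow>
     group G \<and> S \<subseteq> carrier G \<and> generate G S = carrier G \<and>
     coxeter_matrix S m \<and>
     coxeter_relations_hold G S m id \<and>
     (\<forall>(H :: 'w list monoid) f. group H \<longrightarrow> f ` S \<subseteq> carrier H \<longrightarrow>
        coxeter_relations_hold H S m f \<longrightarrow>
        (\<exists>h \<in> hom G H. \<forall>s\<in>S. h s = f s))"

definition coxM :: "'w set \<Rightarrow> ('w \<Rightarrow> 'w \<Rightarrow> enat) \<Rightarrow> ('w \<times> 'w) set" where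
  "coxM S m = {(s, t). s \<in> S \<and> t \<in> S \<and> s \<noteq> t \<and> m s t < \<infinity>}"

definition coxN :: "('w, 'x) monoid_scheme \<Rightarrow> 'w set \<Rightarrow> ('w \<Rightarrow> 'w \<Rightarrow> enat) \<Rightarrow> ('w \<times> 'w) set" where
  "coxN G S m = (\<Union>x\<in>carrier G. {(x \<otimes>\<^bsub>G\<^esub> s \<otimes>\<^bsub>G\<^esub> inv\<^bsub>G\<^esub> x, x \<otimes>\<^bsub>G\<^esub> t \<otimes>\<^bsub>G\<^esub> inv\<^bsub>G\<^esub> x) | s t. (s, t) \<in> coxM S m})"

definition dihedral_sub :: "('w, 'x) monoid_scheme \<Rightarrow> 'w \<Rightarrow> 'w \<Rightarrow> 'w set" where
  "dihedral_sub G s t = generate G {s, t}"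

definition conj_set :: "('w, 'x) monoid_scheme \<Rightarrow> 'w \<Rightarrow> 'w set \<Rightarrow> 'w set" where
  "conj_set G q A = {q \<otimes>\<^bsub>G\<^esub> a \<otimes>\<^bsub>G\<^esub> inv\<^bsub>G\<^esub> q | a. a \<in> A}"

end

theory Submission
  imports Defs Complex_Main
begin

locale coxsys =
  fixes G :: "('w,'x) monoid_scheme" (structure) and S :: "'w set" and m :: "'w \<Rightarrow> 'w \<Rightarrow> enat"
  assumes cs: "coxeter_system G S m"
begin

lemma grp: "group G" using cs by (simp add: coxeter_system_def)

sublocale group G by (rule grp)

lemma S_carr: "S \<subseteq> carrier G" using cs by (simp add: coxeter_system_def)
lemma gen_S: "generate G S = carrier G" using cs by (simp add: coxeter_system_def)
lemma cm: "coxeter_matrix S m" using cs by (simp add: coxeter_system_def)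
lemma rel: "coxeter_relations_hold G S m id" using cs by (simp add: coxeter_system_def)
lemma univ: "\<And>(H :: 'w list monoid) f. group H \<Longrightarrow> f ` S \<subseteq> carrier H \<Longrightarrow>
        coxeter_relations_hold H S m f \<Longrightarrow> (\<exists>h \<in> hom G H. \<forall>s\<in>S. h s = f s)"
  using cs by (simp add: coxeter_system_def)

lemma m_diag: "s \<in> S \<Longrightarrow> m s s = 1" using cm by (simp add: coxeter_matrix_def)
lemma m_sym: "s \<in> S \<Longrightarrow> t \<in> S \<Longrightarrow> m s t = m t s" using cm by (simp add: coxeter_matrix_def)
lemma m_ge2: "s \<in> S \<Longrightarrow> t \<in> S \<Longrightarrow> s \<noteq> t \<Longrightarrow> m s t \<ge> 2" using cm by (simp add: coxeter_matrix_def)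

lemma S_in: "s \<in> S \<Longrightarrow> s \<in> carrier G" using S_carr by blast

lemma S_sq: "s \<in> S \<Longrightarrow> s \<otimes> s = \<one>"
proof -
  assume s: "s \<in> S"
  have "(s \<otimes> s) [^] the_enat (m s s) = \<one>" using rel s m_diag[OF s]
    unfolding coxeter_relations_hold_def by (metis id_apply enat.distinct(1) one_enat_def)
  then show ?thesis using m_diag[OF s] s S_in by (simp add: one_enat_def)
qed

lemma S_inv: "s \<in> S \<Longrightarrow> inv s = s"
  using S_sq S_in by (metis inv_equality)

lemma rel_st: "s \<in> S \<Longrightarrow> t \<in> S \<Longrightarrow> m s t \<noteq> \<infinity> \<Longrightarrow> (s \<otimes> t) [^] the_enat (m s t) = \<one>"
  using rel by (auto simp: coxeter_relations_hold_def)

definition wprod :: "'w list \<Rightarrow> 'w" where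
  "wprod xs = foldr (\<lambda>x a. x \<otimes> a) xs \<one>"

lemma wprod_Nil[simp]: "wprod [] = \<one>" by (simp add: wprod_def)
lemma wprod_Cons[simp]: "wprod (x # xs) = x \<otimes> wprod xs" by (simp add: wprod_def)

lemma wprod_closed[simp]: "set xs \<subseteq> carrier G \<Longrightarrow> wprod xs \<in> carrier G"
  by (induct xs) auto

lemma wprod_closedS[simp]: "set xs \<subseteq> S \<Longrightarrow> wprod xs \<in> carrier G"
  using S_carr by (intro wprod_closed) auto

lemma wprod_append: "set xs \<subseteq> carrier G \<Longrightarrow> set ys \<subseteq> carrier G \<Longrightarrow>
   wprod (xs @ ys) = wprod xs \<otimes> wprod ys"
  by (induct xs) (auto simp: m_assoc)

lemma wprod_appendS: "set xs \<subseteq> S \<Longrightarrow> set ys \<subseteq> S \<Longrightarrow>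
   wprod (xs @ ys) = wprod xs \<otimes> wprod ys"
  using S_carr by (intro wprod_append) auto

lemma wprod_rev: "set xs \<subseteq> S \<Longrightarrow> inv (wprod xs) = wprod (rev xs)"
proof (induct xs)
  case Nil then show ?case by simp
next
  case (Cons x xs)
  then have x: "x \<in> S" and xs: "set xs \<subseteq> S" by auto
  have "inv (wprod (x # xs)) = inv (wprod xs) \<otimes> inv x"
    using x xs S_in by (simp add: inv_mult_group)
  also have "\<dots> = wprod (rev xs) \<otimes> wprod [x]" using Cons x S_in by (simp add: S_inv)
  also have "\<dots> = wprod (rev (x#xs))" using xs x by (simp add: wprod_appendS)
  finally show ?case .
qed

lemma gen_words: assumes "A \<subseteq> S" shows "generate G A = wprod ` lists A"
proof
  show "generate G A \<subseteq> wprod ` lists A"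
  proof
    fix h assume "h \<in> generate G A"
    then show "h \<in> wprod ` lists A"
    proof (induct rule: generate.induct)
      case one then show ?case by (auto intro: image_eqI[where x="[]"])
    next
      case (incl h) then show ?case using assms S_in
        by (auto intro!: image_eqI[where x="[h]"])
    next
      case (inv h) then show ?case using assms S_in S_inv
        by (auto intro!: image_eqI[where x="[h]"])
    next
      case (eng h1 h2)
      then obtain xs ys where "xs \<in> lists A" "ys \<in> lists A" "h1 = wprod xs" "h2 = wprod ys" by auto
      then show ?case using assms by (auto intro!: image_eqI[where x="xs@ys"] wprod_appendS[symmetric])
    qed
  qed
next
  show "wprod ` lists A \<subseteq> generate G A"
  proof
    fix h assume "h \<in> wprod ` lists A"
    then obtain xs where xs: "xs \<in> lists A" "h = wprod xs" by auto
    have "wprod xs \<in> generate G A" using xs(1)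
    proof (induct xs)
      case Nil then show ?case by (simp add: generate.one)
    next
      case (Cons x xs) then show ?case by (auto intro: generate.eng generate.incl)
    qed
    then show "h \<in> generate G A" using xs by simp
  qed
qed

lemma carrier_words: "carrier G = wprod ` lists S"
  using gen_words[of S] gen_S by simp

lemma obtain_word: assumes "w \<in> carrier G" obtains xs where "xs \<in> lists S" "wprod xs = w"
  using assms carrier_words by auto

end


context coxsys
begin

lemma univ_any:
  fixes H :: "('h,'y) monoid_scheme"
  assumes gH: "group H" and fS: "f ` S \<subseteq> carrier H" and rH: "coxeter_relations_hold H S m f"
  shows "\<exists>h \<in> hom G H. \<forall>s\<in>S. h s = f s"
proof -
  interpret H: group H by (rule gH)
  define ev where "ev xs = foldr (\<lambda>x a. f x \<otimes>\<^bsub>H\<^esub> a) xs \<one>\<^bsub>H\<^esub>" for xs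
  have ev_Nil[simp]: "ev [] = \<one>\<^bsub>H\<^esub>" by (simp add: ev_def)
  have ev_Cons[simp]: "ev (x#xs) = f x \<otimes>\<^bsub>H\<^esub> ev xs" for x xs by (simp add: ev_def)
  have ev_closed: "xs \<in> lists S \<Longrightarrow> ev xs \<in> carrier H" for xs
    using fS by (induct xs) auto
  have ev_app: "xs \<in> lists S \<Longrightarrow> ys \<in> lists S \<Longrightarrow> ev (xs @ ys) = ev xs \<otimes>\<^bsub>H\<^esub> ev ys" for xs ys
  proof (induct xs)
    case (Cons a xs)
    then have "f a \<in> carrier H" "ev xs \<in> carrier H" "ev ys \<in> carrier H" using fS ev_closed by auto
    then show ?case using Cons by (simp add: H.m_assoc)
  qed (simp add: ev_closed)
  have fsq: "s \<in> S \<Longrightarrow> f s \<otimes>\<^bsub>H\<^esub> f s = \<one>\<^bsub>H\<^esub>" for s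
  proof -
    assume s: "s \<in> S"
    have "(f s \<otimes>\<^bsub>H\<^esub> f s) [^]\<^bsub>H\<^esub> the_enat (m s s) = \<one>\<^bsub>H\<^esub>" using rH s m_diag[OF s]
      unfolding coxeter_relations_hold_def by (metis enat.distinct(1) one_enat_def)
    moreover have "f s \<in> carrier H" using s fS by auto
    ultimately show ?thesis using m_diag[OF s] by (simp add: one_enat_def)
  qed
  have ev_rev: "xs \<in> lists S \<Longrightarrow> inv\<^bsub>H\<^esub> (ev xs) = ev (rev xs)" for xs
  proof (induct xs)
    case Nil then show ?case by simp
  next
    case (Cons x xs)
    then have x: "x \<in> S" and xs: "xs \<in> lists S" by auto
    have fx: "f x \<in> carrier H" using x fS by auto
    have ix: "inv\<^bsub>H\<^esub> (f x) = f x" using fsq[OF x] fx by (metis H.inv_equality)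
    have "inv\<^bsub>H\<^esub> (ev (x # xs)) = inv\<^bsub>H\<^esub> (ev xs) \<otimes>\<^bsub>H\<^esub> inv\<^bsub>H\<^esub> (f x)"
      using fx ev_closed[OF xs] by (simp add: H.inv_mult_group)
    also have "\<dots> = ev (rev xs) \<otimes>\<^bsub>H\<^esub> ev [x]" using Cons xs ix fx by simp
    also have "\<dots> = ev (rev (x#xs))" using xs x ev_app[of "rev xs" "[x]"] by (simp add: in_lists_conv_set)
    finally show ?case .
  qed
  define K where "K = ev ` lists S"
  have K_carr: "K \<subseteq> carrier H" using ev_closed K_def by auto
  have K_one: "\<one>\<^bsub>H\<^esub> \<in> K" unfolding K_def by (auto intro!: image_eqI[where x="[]"])
  have K_mult: "a \<in> K \<Longrightarrow> b \<in> K \<Longrightarrow> a \<otimes>\<^bsub>H\<^esub> b \<in> K" for a b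
    unfolding K_def by (auto intro!: image_eqI ev_app[symmetric])
  have K_inv: "a \<in> K \<Longrightarrow> inv\<^bsub>H\<^esub> a \<in> K" for a
    unfolding K_def by (auto simp: ev_rev in_lists_conv_set intro!: image_eqI[where x="rev _"])
  have K_f: "s \<in> S \<Longrightarrow> f s \<in> K" for s
    unfolding K_def using fS by (auto intro!: image_eqI[where x="[s]"])
  define rep where "rep k = (SOME xs. xs \<in> lists S \<and> ev xs = k)" for k
  have rep: "k \<in> K \<Longrightarrow> rep k \<in> lists S \<and> ev (rep k) = k" for k
    unfolding rep_def K_def by (rule someI_ex) auto
  have rep_ev: "a \<in> rep ` K \<Longrightarrow> rep (ev a) = a" for a
    using rep by auto
  have ev_rep: "k \<in> K \<Longrightarrow> ev (rep k) = k" for k using rep by auto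
  have evK: "a \<in> rep ` K \<Longrightarrow> ev a \<in> K" for a using rep by auto
  define H' where "H' = \<lparr>carrier = rep ` K, monoid.mult = (\<lambda>a b. rep (ev a \<otimes>\<^bsub>H\<^esub> ev b)), one = rep \<one>\<^bsub>H\<^esub>\<rparr>"
  have gH': "group H'"
  proof (rule groupI)
    fix x y assume "x \<in> carrier H'" "y \<in> carrier H'"
    then show "x \<otimes>\<^bsub>H'\<^esub> y \<in> carrier H'" by (auto simp: H'_def intro: K_mult evK)
  next
    show "\<one>\<^bsub>H'\<^esub> \<in> carrier H'" using K_one by (simp add: H'_def)
  next
    fix x y z assume xyz: "x \<in> carrier H'" "y \<in> carrier H'" "z \<in> carrier H'"
    then have "ev x \<in> K" "ev y \<in> K" "ev z \<in> K" by (auto simp: H'_def intro: evK)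
    then show "x \<otimes>\<^bsub>H'\<^esub> y \<otimes>\<^bsub>H'\<^esub> z = x \<otimes>\<^bsub>H'\<^esub> (y \<otimes>\<^bsub>H'\<^esub> z)"
      using K_carr by (simp add: H'_def ev_rep K_mult H.m_assoc subsetD)
  next
    fix x assume "x \<in> carrier H'"
    then have x: "x \<in> rep ` K" by (simp add: H'_def)
    then show "\<one>\<^bsub>H'\<^esub> \<otimes>\<^bsub>H'\<^esub> x = x"
      using K_one K_carr evK[OF x] by (simp add: H'_def ev_rep rep_ev subsetD)
  next
    fix x assume "x \<in> carrier H'"
    then have x: "x \<in> rep ` K" by (simp add: H'_def)
    have ik: "inv\<^bsub>H\<^esub> (ev x) \<in> K" using K_inv evK[OF x] by blast
    show "\<exists>y\<in>carrier H'. y \<otimes>\<^bsub>H'\<^esub> x = \<one>\<^bsub>H'\<^esub>"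
    proof (intro bexI)
      show "rep (inv\<^bsub>H\<^esub> (ev x)) \<in> carrier H'" using ik by (simp add: H'_def)
      show "rep (inv\<^bsub>H\<^esub> (ev x)) \<otimes>\<^bsub>H'\<^esub> x = \<one>\<^bsub>H'\<^esub>"
        using ik evK[OF x] K_carr by (simp add: H'_def ev_rep subsetD)
    qed
  qed
  have powH': "a \<in> rep ` K \<Longrightarrow> a [^]\<^bsub>H'\<^esub> n = rep ((ev a) [^]\<^bsub>H\<^esub> n) \<and> (ev a) [^]\<^bsub>H\<^esub> n \<in> K" for a and n :: nat
  proof (induct n)
    case 0 then show ?case using K_one by (simp add: H'_def)
  next
    case (Suc n)
    then show ?case using evK[OF Suc(2)] K_carr
      by (simp add: H'_def ev_rep K_mult subsetD)
  qed
  define f' where "f' s = rep (f s)" for s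
  have f'S: "f' ` S \<subseteq> carrier H'" using K_f by (auto simp: f'_def H'_def)
  have rH': "coxeter_relations_hold H' S m f'"
    unfolding coxeter_relations_hold_def
  proof (intro ballI impI)
    fix s t assume st: "s \<in> S" "t \<in> S" "m s t \<noteq> \<infinity>"
    have e: "f' s \<otimes>\<^bsub>H'\<^esub> f' t = rep (f s \<otimes>\<^bsub>H\<^esub> f t)"
      using st K_f by (simp add: f'_def H'_def ev_rep)
    have mem: "rep (f s \<otimes>\<^bsub>H\<^esub> f t) \<in> rep ` K" using st K_f K_mult by auto
    have "(f s \<otimes>\<^bsub>H\<^esub> f t) [^]\<^bsub>H\<^esub> the_enat (m s t) = \<one>\<^bsub>H\<^esub>"
      using rH st unfolding coxeter_relations_hold_def by blast
    then show "(f' s \<otimes>\<^bsub>H'\<^esub> f' t) [^]\<^bsub>H'\<^esub> the_enat (m s t) = \<one>\<^bsub>H'\<^esub>"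
      using powH'[OF mem, of "the_enat (m s t)"] e st K_f K_mult
      by (simp add: ev_rep H'_def)
  qed
  have H'type: "H' = (H' :: 'w list monoid)" ..
  obtain h' where h': "h' \<in> hom G H'" "\<forall>s\<in>S. h' s = f' s"
    using univ[OF gH' f'S rH'] by blast
  define h where "h x = ev (h' x)" for x
  have hc: "x \<in> carrier G \<Longrightarrow> h' x \<in> rep ` K" for x
    using h'(1) by (auto simp: hom_def H'_def)
  have "h \<in> hom G H"
  proof (rule homI)
    fix x assume "x \<in> carrier G" then show "h x \<in> carrier H"
      using hc evK K_carr by (auto simp: h_def)
  next
    fix x y assume xy: "x \<in> carrier G" "y \<in> carrier G"
    have "h' (x \<otimes> y) = h' x \<otimes>\<^bsub>H'\<^esub> h' y" using h'(1) xy by (simp add: hom_mult)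
    then show "h (x \<otimes> y) = h x \<otimes>\<^bsub>H\<^esub> h y"
      using hc[OF xy(1)] hc[OF xy(2)] evK K_mult by (simp add: h_def H'_def ev_rep)
  qed
  moreover have "\<forall>s\<in>S. h s = f s" using h'(2) K_f by (simp add: h_def f'_def ev_rep)
  ultimately show ?thesis by blast
qed

end


context coxsys
begin

definition T :: "'w set" where
  "T = {g \<otimes> r \<otimes> inv g | g r. g \<in> carrier G \<and> r \<in> S}"

lemma T_carr: "t \<in> T \<Longrightarrow> t \<in> carrier G"
  unfolding T_def using S_in by auto

lemma S_T: "r \<in> S \<Longrightarrow> r \<in> T"
proof -
  assume r: "r \<in> S"
  have "r = \<one> \<otimes> r \<otimes> inv \<one>" using r S_in by simp
  then show ?thesis unfolding T_def using r by blast
qed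

lemma T_conj: assumes "g \<in> carrier G" "t \<in> T" shows "g \<otimes> t \<otimes> inv g \<in> T"
proof -
  obtain h r where hr: "t = h \<otimes> r \<otimes> inv h" "h \<in> carrier G" "r \<in> S" using assms(2) T_def by auto
  have "g \<otimes> t \<otimes> inv g = (g \<otimes> h) \<otimes> r \<otimes> inv (g \<otimes> h)"
    using hr assms(1) S_in by (simp add: m_assoc inv_mult_group)
  then show ?thesis using hr assms(1) unfolding T_def by blast
qed

lemma T_conjS: "r \<in> S \<Longrightarrow> t \<in> T \<Longrightarrow> r \<otimes> t \<otimes> r \<in> T"
  using T_conj[of r t] S_in S_inv by simp

primrec rl :: "'w list \<Rightarrow> 'w list" where
  "rl [] = []"
| "rl (x # xs) = (inv (wprod xs) \<otimes> x \<otimes> wprod xs) # rl xs"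

lemma length_rl[simp]: "length (rl xs) = length xs"
  by (induct xs) auto

lemma rl_T: "set xs \<subseteq> S \<Longrightarrow> set (rl xs) \<subseteq> T"
proof (induct xs)
  case (Cons x xs)
  then have "inv (wprod xs) \<otimes> x \<otimes> wprod xs \<in> T"
    using T_conj[of "inv (wprod xs)" x] S_T by simp
  then show ?case using Cons by simp
qed simp

definition piS :: "'w \<Rightarrow> ('w \<times> bool \<Rightarrow> 'w \<times> bool)" where
  "piS r = (\<lambda>p \<in> T \<times> UNIV. (r \<otimes> fst p \<otimes> r, snd p \<noteq> (fst p = r)))"

lemma conj_r_eq: assumes "r \<in> S" "t \<in> carrier G" shows "(r \<otimes> t \<otimes> r = r) = (t = r)"
proof
  assume "r \<otimes> t \<otimes> r = r"
  then have "r \<otimes> (r \<otimes> t \<otimes> r) \<otimes> r = r \<otimes> r \<otimes> r" by simp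
  then show "t = r" using assms S_in S_sq by (simp add: m_assoc[symmetric])
    (metis S_sq assms(1) l_one m_assoc one_closed r_one S_in)
qed (use assms S_sq S_in in \<open>simp add: m_assoc\<close>)

lemma conj_conj: assumes "r \<in> S" "t \<in> carrier G" shows "r \<otimes> (r \<otimes> t \<otimes> r) \<otimes> r = t"
  using assms S_in S_sq by (simp add: m_assoc[symmetric]) (simp add: m_assoc)

lemma piS_Bij: assumes r: "r \<in> S" shows "piS r \<in> Bij (T \<times> UNIV)"
proof -
  have inv: "piS r (piS r p) = p" if pT: "p \<in> T \<times> UNIV" for p
  proof -
    obtain t e where p: "p = (t, e)" "t \<in> T" using pT by (cases p) auto
    have tc: "t \<in> carrier G" using p T_carr by auto
    have mem: "r \<otimes> t \<otimes> r \<in> T" using T_conjS r p by auto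
    have q: "(r \<otimes> t \<otimes> r = r) = (t = r)" using conj_r_eq r tc by blast
    have "piS r (piS r p) = (r \<otimes> (r \<otimes> t \<otimes> r) \<otimes> r, (e \<noteq> (t = r)) \<noteq> (r \<otimes> t \<otimes> r = r))"
      using p mem by (simp add: piS_def)
    also have "\<dots> = p" unfolding q conj_conj[OF r tc] p by auto
    finally show ?thesis .
  qed
  have into: "piS r p \<in> T \<times> UNIV" if "p \<in> T \<times> UNIV" for p
    using that T_conjS r by (auto simp: piS_def)
  have "bij_betw (piS r) (T \<times> UNIV) (T \<times> UNIV)"
    by (rule bij_betw_byWitness[where f'="piS r"]) (use inv into in \<open>blast+\<close>)
  then show ?thesis unfolding Bij_def piS_def by auto
qed

definition Pi_w :: "'w list \<Rightarrow> ('w \<times> bool \<Rightarrow> 'w \<times> bool)" where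
  "Pi_w xs = foldr (\<lambda>x acc. compose (T \<times> UNIV) (piS x) acc) xs (\<lambda>p \<in> T \<times> UNIV. p)"

lemma Pi_w_Nil[simp]: "Pi_w [] = (\<lambda>p \<in> T \<times> UNIV. p)" by (simp add: Pi_w_def)
lemma Pi_w_Cons[simp]: "Pi_w (x # xs) = compose (T \<times> UNIV) (piS x) (Pi_w xs)" by (simp add: Pi_w_def)

lemma Pi_w_Bij: "set xs \<subseteq> S \<Longrightarrow> Pi_w xs \<in> Bij (T \<times> UNIV)"
  by (induct xs) (auto simp: id_Bij compose_Bij piS_Bij)

lemma Pi_w_formula: assumes "set xs \<subseteq> S" "t \<in> T"
  shows "Pi_w xs (t, e) = (wprod xs \<otimes> t \<otimes> inv (wprod xs), e \<noteq> odd (count_list (rl xs) t))"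
  using assms(1)
proof (induct xs arbitrary: e)
  case Nil then show ?case using assms(2) T_carr by simp
next
  case (Cons x xs)
  then have x: "x \<in> S" and xs: "set xs \<subseteq> S" by auto
  define W where "W = wprod xs"
  have W: "W \<in> carrier G" using xs W_def by simp
  have tc: "t \<in> carrier G" using assms(2) T_carr by auto
  have xc: "x \<in> carrier G" using x S_in by auto
  have mem: "W \<otimes> t \<otimes> inv W \<in> T" using T_conj[OF W assms(2)] .
  have e1: "x \<otimes> (W \<otimes> t \<otimes> inv W) \<otimes> x = (x \<otimes> W) \<otimes> t \<otimes> inv (x \<otimes> W)"
    using W tc xc x S_inv by (simp add: m_assoc inv_mult_group)
  have e2: "(W \<otimes> t \<otimes> inv W = x) = (inv W \<otimes> x \<otimes> W = t)"
  proof
    assume h: "W \<otimes> t \<otimes> inv W = x"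
    have "inv W \<otimes> (W \<otimes> t \<otimes> inv W) \<otimes> W = t" using W tc
      by (simp add: m_assoc[symmetric]) (simp add: m_assoc)
    then show "inv W \<otimes> x \<otimes> W = t" using h by simp
  next
    assume h: "inv W \<otimes> x \<otimes> W = t"
    have "W \<otimes> (inv W \<otimes> x \<otimes> W) \<otimes> inv W = x" using W xc
      by (simp add: m_assoc[symmetric]) (simp add: m_assoc)
    then show "W \<otimes> t \<otimes> inv W = x" using h by simp
  qed
  have "Pi_w (x # xs) (t, e) = piS x (Pi_w xs (t, e))" using assms(2) by (simp add: compose_def)
  also have "\<dots> = piS x (W \<otimes> t \<otimes> inv W, e \<noteq> odd (count_list (rl xs) t))"
    using Cons(1)[OF xs] W_def by simp
  also have "\<dots> = (x \<otimes> W \<otimes> t \<otimes> inv (x \<otimes> W), e \<noteq> odd (count_list (rl (x#xs)) t))"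
    using mem e1 e2 by (auto simp: piS_def W_def)
  finally show ?case by (simp add: W_def)
qed

end


context coxsys
begin

primrec altw :: "'w \<Rightarrow> 'w \<Rightarrow> nat \<Rightarrow> 'w list" where
  "altw r r' 0 = []"
| "altw r r' (Suc n) = r # r' # altw r r' n"

lemma altw_set: "r \<in> S \<Longrightarrow> r' \<in> S \<Longrightarrow> set (altw r r' n) \<subseteq> S"
  by (induct n) auto

lemma length_altw[simp]: "length (altw r r' n) = 2 * n"
  by (induct n) auto

lemma altw_nth: "i < 2 * n \<Longrightarrow> altw r r' n ! i = (if even i then r else r')"
proof (induct n arbitrary: i)
  case 0 then show ?case by simp
next
  case (Suc n)
  show ?case
  proof (cases i)
    case 0 then show ?thesis by simp
  next
    case (Suc j) note ij = this
    show ?thesis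
    proof (cases j)
      case 0 then show ?thesis using ij by simp
    next
      case (Suc k)
      then show ?thesis using ij Suc.hyps[of k] Suc.prems by simp
    qed
  qed
qed

lemma wprod_altw: assumes "r \<in> S" "r' \<in> S"
  shows "wprod (altw r r' n) = (r \<otimes> r') [^] n"
proof (induct n)
  case 0 then show ?case by simp
next
  case (Suc n)
  have c: "r \<otimes> r' \<in> carrier G" using assms S_in by auto
  have "wprod (altw r r' (Suc n)) = (r \<otimes> r') \<otimes> (r \<otimes> r') [^] n"
    using Suc assms S_in altw_set[OF assms, of n] by (simp add: m_assoc)
  then show ?case using nat_pow_Suc2[OF c] by simp
qed

lemma r_invpow: assumes "r \<in> S" "r' \<in> S"
  shows "r \<otimes> inv ((r \<otimes> r') [^] (k::nat)) = (r \<otimes> r') [^] k \<otimes> r"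
proof (induct k)
  case 0 then show ?case using assms S_in by simp
next
  case (Suc k)
  define c where "c = r \<otimes> r'"
  have rc: "r \<in> carrier G" "r' \<in> carrier G" using assms S_in by auto
  have c: "c \<in> carrier G" using rc c_def by auto
  have ic: "inv c = r' \<otimes> r" using rc assms S_inv by (simp add: c_def inv_mult_group)
  have "r \<otimes> inv (c [^] Suc k) = r \<otimes> (inv c \<otimes> inv (c [^] k))"
    using c by (simp add: inv_mult_group)
  also have "\<dots> = (r \<otimes> r') \<otimes> (r \<otimes> inv (c [^] k))" using rc c ic by (simp add: m_assoc)
  also have "\<dots> = c \<otimes> (c [^] k \<otimes> r)" using Suc c_def by simp
  also have "\<dots> = c [^] Suc k \<otimes> r" using c rc nat_pow_Suc2[OF c] by (simp add: m_assoc)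
  finally show ?case by (simp add: c_def)
qed

lemma prefix_altw: assumes "r \<in> S" "r' \<in> S"
  shows "i \<le> 2 * n \<Longrightarrow> wprod (take i (altw r r' n)) =
     (if even i then (r \<otimes> r') [^] (i div 2) else (r \<otimes> r') [^] (i div 2) \<otimes> r)"
proof (induct n arbitrary: i)
  case 0 then show ?case by simp
next
  case (Suc n)
  define c where "c = r \<otimes> r'"
  have rc: "r \<in> carrier G" "r' \<in> carrier G" using assms S_in by auto
  have c: "c \<in> carrier G" using rc c_def by auto
  show ?case
  proof (cases i)
    case 0 then show ?thesis by simp
  next
    case (Suc j) note ij = this
    show ?thesis
    proof (cases j)
      case 0 then show ?thesis using ij rc by simp
    next
      case (Suc k)
      have k: "k \<le> 2 * n" using Suc ij \<open>i \<le> 2 * Suc n\<close> by simp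
      have tk: "set (take k (altw r r' n)) \<subseteq> S"
        using altw_set[OF assms, of n] by (meson order_trans set_take_subset)
      have "wprod (take i (altw r r' (Suc n))) = c \<otimes> wprod (take k (altw r r' n))"
        using ij Suc rc tk by (simp add: m_assoc c_def)
      also have "\<dots> = c \<otimes> (if even k then c [^] (k div 2) else c [^] (k div 2) \<otimes> r)"
        using Suc.hyps[OF k] by (simp add: c_def)
      also have "\<dots> = (if even i then c [^] (i div 2) else c [^] (i div 2) \<otimes> r)"
        using ij Suc c rc nat_pow_Suc2[OF c, of "k div 2"] by (auto simp: m_assoc)
      finally show ?thesis by (simp add: c_def)
    qed
  qed
qed

lemma rl_nth: "i < length xs \<Longrightarrow>
   rl xs ! i = inv (wprod (drop (Suc i) xs)) \<otimes> xs ! i \<otimes> wprod (drop (Suc i) xs)"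
proof (induct xs arbitrary: i)
  case Nil then show ?case by simp
next
  case (Cons x xs) then show ?case by (cases i) auto
qed

lemma rl_nth_one: assumes "set xs \<subseteq> S" "wprod xs = \<one>" "i < length xs"
  shows "rl xs ! i = wprod (take i xs) \<otimes> xs ! i \<otimes> inv (wprod (take i xs))"
proof -
  define A where "A = wprod (take i xs)"
  define x where "x = xs ! i"
  have xS: "x \<in> S" using assms x_def by auto
  have x: "x \<in> carrier G" using xS S_in by auto
  have tS: "set (take i xs) \<subseteq> S" using assms(1) by (meson order_trans set_take_subset)
  have dS: "set (drop (Suc i) xs) \<subseteq> S" using assms(1) by (meson order_trans set_drop_subset)
  have A: "A \<in> carrier G" using tS A_def by simp
  have tSuc: "take (Suc i) xs = take i xs @ [x]" using assms(3) x_def by (simp add: take_Suc_conv_app_nth)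
  have "wprod (take (Suc i) xs) \<otimes> wprod (drop (Suc i) xs) = \<one>"
    using assms(1,2) wprod_appendS[of "take (Suc i) xs" "drop (Suc i) xs"]
    by (metis append_take_drop_id dS order_trans set_take_subset)
  moreover have "wprod (take (Suc i) xs) = A \<otimes> x"
    using tSuc tS xS x by (simp add: wprod_appendS A_def)
  ultimately have D0: "(A \<otimes> x) \<otimes> wprod (drop (Suc i) xs) = \<one>" by simp
  have Dc: "wprod (drop (Suc i) xs) \<in> carrier G" using dS by simp
  have D: "wprod (drop (Suc i) xs) = inv (A \<otimes> x)"
    using inv_equality[OF inv_comm[OF D0 _ Dc] _ Dc] A x by simp
  have "rl xs ! i = inv (inv (A \<otimes> x)) \<otimes> x \<otimes> inv (A \<otimes> x)"
    using rl_nth[OF assms(3)] D x_def by simp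
  also have "\<dots> = A \<otimes> (x \<otimes> x) \<otimes> (inv x \<otimes> inv A)" using A x by (simp add: inv_mult_group m_assoc)
  also have "\<dots> = A \<otimes> x \<otimes> inv A" using A x S_sq[OF xS] S_inv[OF xS] by (simp add: m_assoc)
  finally show ?thesis by (simp add: A_def x_def)
qed

lemma rl_altw: assumes "r \<in> S" "r' \<in> S" "(r \<otimes> r') [^] n = \<one>"
  shows "rl (altw r r' n) = map (\<lambda>i. (r \<otimes> r') [^] i \<otimes> r) [0..<2*n]"
proof (rule nth_equalityI)
  show "length (rl (altw r r' n)) = length (map (\<lambda>i. (r \<otimes> r') [^] i \<otimes> r) [0..<2 * n])" by simp
next
  fix i assume "i < length (rl (altw r r' n))"
  then have i: "i < 2 * n" by simp
  define c where "c = r \<otimes> r'"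
  have rc: "r \<in> carrier G" "r' \<in> carrier G" using assms S_in by auto
  have c: "c \<in> carrier G" using rc c_def by auto
  have one: "wprod (altw r r' n) = \<one>" using wprod_altw[OF assms(1,2)] assms(3) by simp
  have e: "rl (altw r r' n) ! i = wprod (take i (altw r r' n)) \<otimes> altw r r' n ! i \<otimes> inv (wprod (take i (altw r r' n)))"
    using rl_nth_one[OF altw_set[OF assms(1,2)] one] i by simp
  have ri: "r \<otimes> inv (c [^] k) = c [^] k \<otimes> r" for k :: nat using r_invpow[OF assms(1,2)] c_def by simp
  have pre: "wprod (take i (altw r r' n)) = (if even i then c [^] (i div 2) else c [^] (i div 2) \<otimes> r)"
    using prefix_altw[OF assms(1,2), of i n] i unfolding c_def by simp
  have "rl (altw r r' n) ! i = c [^] i \<otimes> r"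
  proof (cases "even i")
    case True
    then obtain k where k: "i = 2 * k" by auto
    have p: "wprod (take i (altw r r' n)) = c [^] k" using pre True k by simp
    have x: "altw r r' n ! i = r" using altw_nth[OF i] True by simp
    have "rl (altw r r' n) ! i = c [^] k \<otimes> r \<otimes> inv (c [^] k)"
      using e unfolding p x .
    also have "\<dots> = c [^] k \<otimes> (r \<otimes> inv (c [^] k))" using c rc by (simp add: m_assoc)
    also have "\<dots> = c [^] k \<otimes> (c [^] k \<otimes> r)" unfolding ri ..
    also have "\<dots> = (c [^] k \<otimes> c [^] k) \<otimes> r" using c rc by (simp add: m_assoc)
    also have "\<dots> = c [^] i \<otimes> r" unfolding nat_pow_mult[OF c] k mult_2 ..
    finally show ?thesis .
  next
    case False
    then obtain k where k: "i = 2 * k + 1" using oddE by blast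
    have p: "wprod (take i (altw r r' n)) = c [^] k \<otimes> r" using pre False k by simp
    have x: "altw r r' n ! i = r'" using altw_nth[OF i] False by simp
    have ir: "inv (c [^] k \<otimes> r) = r \<otimes> inv (c [^] k)"
      using c rc assms(1) S_inv by (simp add: inv_mult_group)
    have "rl (altw r r' n) ! i = (c [^] k \<otimes> r) \<otimes> r' \<otimes> inv (c [^] k \<otimes> r)"
      using e unfolding p x .
    also have "\<dots> = c [^] k \<otimes> c \<otimes> (r \<otimes> inv (c [^] k))"
      unfolding ir using c rc by (simp add: m_assoc c_def)
    also have "\<dots> = c [^] k \<otimes> c \<otimes> (c [^] k \<otimes> r)" unfolding ri ..
    also have "\<dots> = (c [^] k \<otimes> c [^] (1::nat) \<otimes> c [^] k) \<otimes> r" using c rc by (simp add: m_assoc nat_pow_eone)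
    also have "\<dots> = c [^] i \<otimes> r" unfolding nat_pow_mult[OF c] k mult_2 by simp
    finally show ?thesis .
  qed
  then show "rl (altw r r' n) ! i = map (\<lambda>i. (r \<otimes> r') [^] i \<otimes> r) [0..<2 * n] ! i"
    using i by (simp add: c_def)
qed

lemma count_periodic: assumes "\<And>i. g (i + n) = g i"
  shows "even (count_list (map g [0..<2*n]) t)"
proof -
  have "[0..<2*n] = [0..<n] @ [n..<2*n]" using upt_add_eq_append[of 0 n n] by (simp add: mult_2)
  moreover have "map g [n..<2*n] = map g [0..<n]"
  proof -
    have "[n..<2*n] = map (\<lambda>i. i + n) [0..<n]" using map_add_upt[of n n] by (simp add: mult_2)
    then show ?thesis using assms by (simp add: comp_def)
  qed
  ultimately have "map g [0..<2*n] = map g [0..<n] @ map g [0..<n]" by simp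
  then show ?thesis by simp
qed

lemma par_altw: assumes "r \<in> S" "r' \<in> S" "(r \<otimes> r') [^] n = \<one>"
  shows "even (count_list (rl (altw r r' n)) t)"
proof -
  have c: "r \<otimes> r' \<in> carrier G" using assms S_in by auto
  have "(r \<otimes> r') [^] (i + n) \<otimes> r = (r \<otimes> r') [^] i \<otimes> r" for i
    using nat_pow_mult[OF c, of i n, symmetric] assms(3) c by simp
  then show ?thesis unfolding rl_altw[OF assms] by (rule count_periodic)
qed

end


context coxsys
begin

abbreviation "BG \<equiv> BijGroup (T \<times> (UNIV :: bool set))"

lemma BG_mult: "f \<in> Bij (T \<times> UNIV) \<Longrightarrow> g \<in> Bij (T \<times> UNIV) \<Longrightarrow> f \<otimes>\<^bsub>BG\<^esub> g = compose (T \<times> UNIV) f g"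
  by (simp add: BijGroup_def)

lemma BG_one: "\<one>\<^bsub>BG\<^esub> = (\<lambda>p \<in> T \<times> UNIV. p)"
  by (simp add: BijGroup_def)

lemma BG_carrier: "carrier BG = Bij (T \<times> UNIV)"
  by (simp add: BijGroup_def)

lemma BG_group: "group BG" by (rule group_BijGroup)

lemma pow_altw: assumes r: "r \<in> S" and r': "r' \<in> S"
  shows "(piS r \<otimes>\<^bsub>BG\<^esub> piS r') [^]\<^bsub>BG\<^esub> (n::nat) = Pi_w (altw r r' n)"
proof (induct n)
  case 0 then show ?case by (simp add: BG_one)
next
  case (Suc n)
  interpret B: group BG by (rule BG_group)
  have pr: "piS r \<in> Bij (T \<times> UNIV)" "piS r' \<in> Bij (T \<times> UNIV)" using piS_Bij r r' by auto
  have x: "piS r \<otimes>\<^bsub>BG\<^esub> piS r' \<in> carrier BG" using pr by (simp add: BG_carrier compose_Bij BG_mult)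
  have pw: "Pi_w (altw r r' n) \<in> Bij (T \<times> UNIV)" using Pi_w_Bij altw_set r r' by auto
  have "(piS r \<otimes>\<^bsub>BG\<^esub> piS r') [^]\<^bsub>BG\<^esub> Suc n = (piS r \<otimes>\<^bsub>BG\<^esub> piS r') \<otimes>\<^bsub>BG\<^esub> Pi_w (altw r r' n)"
    unfolding B.nat_pow_Suc2[OF x] Suc ..
  also have "\<dots> = compose (T \<times> UNIV) (compose (T \<times> UNIV) (piS r) (piS r')) (Pi_w (altw r r' n))"
    using pr pw by (simp add: BG_mult compose_Bij)
  also have "\<dots> = compose (T \<times> UNIV) (piS r) (compose (T \<times> UNIV) (piS r') (Pi_w (altw r r' n)))"
    using compose_assoc[OF Bij_imp_funcset[OF pw], of "piS r" "piS r'"] by simp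
  also have "\<dots> = Pi_w (altw r r' (Suc n))" by simp
  finally show ?case .
qed

lemma Pi_w_one: assumes "set xs \<subseteq> S" "wprod xs = \<one>" "\<And>t. t \<in> T \<Longrightarrow> even (count_list (rl xs) t)"
  shows "Pi_w xs = (\<lambda>p \<in> T \<times> UNIV. p)"
proof (rule extensionalityI)
  show "Pi_w xs \<in> extensional (T \<times> UNIV)" using Pi_w_Bij[OF assms(1)] Bij_imp_extensional by blast
  show "(\<lambda>p \<in> T \<times> UNIV. p) \<in> extensional (T \<times> UNIV)" by simp
  fix p assume "p \<in> T \<times> (UNIV :: bool set)"
  then obtain t e where p: "p = (t, e)" "t \<in> T" by (cases p) auto
  then show "Pi_w xs p = (\<lambda>p \<in> T \<times> UNIV. p) p"
    using Pi_w_formula[OF assms(1) p(2)] assms(2,3) T_carr by simp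
qed

lemma piS_rel: "coxeter_relations_hold BG S m piS"
  unfolding coxeter_relations_hold_def
proof (intro ballI impI)
  fix r r' assume rr: "r \<in> S" "r' \<in> S" "m r r' \<noteq> \<infinity>"
  define n where "n = the_enat (m r r')"
  have one: "(r \<otimes> r') [^] n = \<one>" using rel_st rr n_def by simp
  have "Pi_w (altw r r' n) = (\<lambda>p \<in> T \<times> UNIV. p)"
    by (rule Pi_w_one) (use altw_set rr wprod_altw one par_altw in auto)
  then show "(piS r \<otimes>\<^bsub>BG\<^esub> piS r') [^]\<^bsub>BG\<^esub> the_enat (m r r') = \<one>\<^bsub>BG\<^esub>"
    using pow_altw[OF rr(1,2)] n_def by (simp add: BG_one)
qed

definition rho where "rho = (SOME h. h \<in> hom G BG \<and> (\<forall>s\<in>S. h s = piS s))"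

lemma rho: "rho \<in> hom G BG" "\<And>s. s \<in> S \<Longrightarrow> rho s = piS s"
proof -
  have "\<exists>h \<in> hom G BG. \<forall>s\<in>S. h s = piS s"
    by (rule univ_any[OF BG_group]) (use piS_Bij BG_carrier piS_rel in auto)
  then have "rho \<in> hom G BG \<and> (\<forall>s\<in>S. rho s = piS s)"
    unfolding rho_def by (rule someI2_bex) auto
  then show "rho \<in> hom G BG" "\<And>s. s \<in> S \<Longrightarrow> rho s = piS s" by auto
qed

lemma rho_wprod: "set xs \<subseteq> S \<Longrightarrow> rho (wprod xs) = Pi_w xs"
proof (induct xs)
  interpret gh: group_hom G BG rho by (rule group_hom.intro, rule grp, rule BG_group) (simp add: group_hom_axioms_def rho)
  case Nil then show ?case by (simp add: BG_one)
next
  interpret gh: group_hom G BG rho by (rule group_hom.intro, rule grp, rule BG_group) (simp add: group_hom_axioms_def rho)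
  case (Cons x xs)
  then have x: "x \<in> S" and xs: "set xs \<subseteq> S" by auto
  have "rho (wprod (x # xs)) = rho x \<otimes>\<^bsub>BG\<^esub> rho (wprod xs)"
    using x xs S_in by simp
  also have "\<dots> = compose (T \<times> UNIV) (piS x) (Pi_w xs)"
    using Cons x xs rho piS_Bij Pi_w_Bij by (simp add: BG_mult)
  finally show ?case by simp
qed

lemma par_welldef: assumes "set xs \<subseteq> S" "set ys \<subseteq> S" "wprod xs = wprod ys" "t \<in> T"
  shows "odd (count_list (rl xs) t) = odd (count_list (rl ys) t)"
proof -
  have "Pi_w xs = Pi_w ys" using rho_wprod assms by metis
  then have "Pi_w xs (t, False) = Pi_w ys (t, False)" by simp
  then show ?thesis using Pi_w_formula assms by simp
qed

end


lemma count_list_distinct: "distinct xs \<Longrightarrow> x \<in> set xs \<Longrightarrow> count_list xs x = 1"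
proof (induct xs)
  case (Cons y ys) then show ?case by (cases "x = y") (auto simp: count_list_0_iff)
qed simp

context coxsys
begin

definition len :: "'w \<Rightarrow> nat" where
  "len w = (LEAST n. \<exists>xs. set xs \<subseteq> S \<and> length xs = n \<and> wprod xs = w)"

lemma len_word: assumes "w \<in> carrier G"
  obtains xs where "set xs \<subseteq> S" "length xs = len w" "wprod xs = w"
proof -
  obtain xs where "xs \<in> lists S" "wprod xs = w" using obtain_word[OF assms] .
  then have "\<exists>n xs. set xs \<subseteq> S \<and> length xs = n \<and> wprod xs = w" by auto
  then have "\<exists>xs. set xs \<subseteq> S \<and> length xs = len w \<and> wprod xs = w"
    unfolding len_def by (rule LeastI_ex)
  then show ?thesis using that by blast
qed

lemma len_le: "set xs \<subseteq> S \<Longrightarrow> len (wprod xs) \<le> length xs"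
  unfolding len_def by (rule Least_le) blast

lemma distinct_reduced: assumes xs: "set xs \<subseteq> S" and d: "distinct (rl xs)"
  shows "length xs \<le> len (wprod xs)"
proof -
  obtain ys where ys: "set ys \<subseteq> S" "length ys = len (wprod xs)" "wprod ys = wprod xs"
    using len_word[of "wprod xs"] xs by auto
  have "set (rl xs) \<subseteq> set (rl ys)"
  proof
    fix t assume t: "t \<in> set (rl xs)"
    have tT: "t \<in> T" using t rl_T[OF xs] by auto
    have "count_list (rl xs) t = 1" using count_list_distinct[OF d t] .
    then have "odd (count_list (rl ys) t)" using par_welldef[OF xs ys(1) ys(3)[symmetric] tT] by simp
    then have "count_list (rl ys) t \<noteq> 0" by (metis even_zero)
    then show "t \<in> set (rl ys)" by (simp add: count_list_0_iff)
  qed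
  then have "card (set (rl xs)) \<le> card (set (rl ys))" by (simp add: card_mono)
  also have "\<dots> \<le> length (rl ys)" by (rule card_length)
  finally show ?thesis using distinct_card[OF d] ys(2) by simp
qed

lemma del_step: assumes xs: "set xs \<subseteq> S" and x: "x \<in> S" and j: "j < length xs"
  and eq: "inv (wprod xs) \<otimes> x \<otimes> wprod xs = rl xs ! j"
  shows "x \<otimes> wprod xs = wprod (take j xs @ drop (Suc j) xs)"
proof -
  define P where "P = wprod (take j xs)"
  define b where "b = xs ! j"
  define Q where "Q = wprod (drop (Suc j) xs)"
  have tS: "set (take j xs) \<subseteq> S" using xs by (meson order_trans set_take_subset)
  have dS: "set (drop (Suc j) xs) \<subseteq> S" using xs by (meson order_trans set_drop_subset)
  have bS: "b \<in> S" using xs j b_def by auto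
  have P: "P \<in> carrier G" using tS P_def by simp
  have Q: "Q \<in> carrier G" using dS Q_def by simp
  have b: "b \<in> carrier G" using bS S_in by auto
  have xc: "x \<in> carrier G" using x S_in by auto
  have split: "xs = take j xs @ [b] @ drop (Suc j) xs" using j b_def
    by (simp add: id_take_nth_drop)
  have "wprod xs = wprod (take j xs) \<otimes> wprod ([b] @ drop (Suc j) xs)"
    using tS dS bS by (subst split) (rule wprod_appendS, auto)
  then have W: "wprod xs = P \<otimes> b \<otimes> Q" using P Q b by (simp add: P_def Q_def m_assoc)
  define Y where "Y = P \<otimes> b"
  have Y: "Y \<in> carrier G" using P b Y_def by simp
  have rj: "rl xs ! j = inv Q \<otimes> b \<otimes> Q" using rl_nth[OF j] b_def Q_def by simp
  have "inv Q \<otimes> (inv Y \<otimes> x \<otimes> Y) \<otimes> Q = inv (Y \<otimes> Q) \<otimes> x \<otimes> (Y \<otimes> Q)"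
    using Y Q xc by (simp add: inv_mult_group m_assoc)
  also have "\<dots> = inv Q \<otimes> b \<otimes> Q" using eq W rj Y_def by simp
  finally have "inv Q \<otimes> (inv Y \<otimes> x \<otimes> Y) \<otimes> Q = inv Q \<otimes> b \<otimes> Q" .
  then have "inv Y \<otimes> x \<otimes> Y = b" using Y Q xc b
    by (metis inv_closed l_cancel m_closed r_cancel)
  then have "Y \<otimes> (inv Y \<otimes> x \<otimes> Y) = Y \<otimes> b" by simp
  then have "x \<otimes> Y = Y \<otimes> b" using Y xc by (simp add: m_assoc[symmetric])
  also have "\<dots> = P" using P b bS S_sq Y_def by (simp add: m_assoc)
  finally have xY: "x \<otimes> Y = P" .
  have "x \<otimes> wprod xs = (x \<otimes> Y) \<otimes> Q" using W Y_def xc Y Q by (simp add: m_assoc)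
  also have "\<dots> = P \<otimes> Q" using xY by simp
  also have "\<dots> = wprod (take j xs @ drop (Suc j) xs)" using tS dS by (simp add: wprod_appendS P_def Q_def)
  finally show ?thesis .
qed

lemma exists_del: "set xs \<subseteq> S \<Longrightarrow> \<not> distinct (rl xs) \<Longrightarrow>
   \<exists>ys. set ys \<subseteq> set xs \<and> length ys + 2 = length xs \<and> wprod ys = wprod xs"
proof (induct xs)
  case Nil then show ?case by simp
next
  case (Cons x xs)
  then have x: "x \<in> S" and xs: "set xs \<subseteq> S" by auto
  show ?case
  proof (cases "distinct (rl xs)")
    case False
    then obtain ys where ys: "set ys \<subseteq> set xs" "length ys + 2 = length xs" "wprod ys = wprod xs"
      using Cons xs by auto
    show ?thesis using ys by (intro exI[where x="x # ys"]) auto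
  next
    case True
    then have "inv (wprod xs) \<otimes> x \<otimes> wprod xs \<in> set (rl xs)" using Cons.prems(2) by simp
    then obtain j where j: "j < length xs" "rl xs ! j = inv (wprod xs) \<otimes> x \<otimes> wprod xs"
      by (auto simp: in_set_conv_nth)
    have e: "x \<otimes> wprod xs = wprod (take j xs @ drop (Suc j) xs)"
      using del_step[OF xs x j(1)] j(2) by simp
    show ?thesis
      by (intro exI[where x="take j xs @ drop (Suc j) xs"])
        (use e j(1) set_take_subset[of j xs] set_drop_subset[of "Suc j" xs] in auto)
  qed
qed

lemma reduced_distinct: "set xs \<subseteq> S \<Longrightarrow> len (wprod xs) = length xs \<Longrightarrow> distinct (rl xs)"
proof (rule ccontr)
  assume xs: "set xs \<subseteq> S" and l: "len (wprod xs) = length xs" and nd: "\<not> distinct (rl xs)"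
  obtain ys where ys: "set ys \<subseteq> set xs" "length ys + 2 = length xs" "wprod ys = wprod xs"
    using exists_del[OF xs nd] by auto
  have "len (wprod ys) \<le> length ys" using ys(1) xs len_le by auto
  then show False using ys l by simp
qed

lemma len_parity: "set xs \<subseteq> S \<Longrightarrow> even (length xs) = even (len (wprod xs))"
proof (induct "length xs" arbitrary: xs rule: less_induct)
  case less
  show ?case
  proof (cases "len (wprod xs) = length xs")
    case True then show ?thesis by simp
  next
    case False
    then have "len (wprod xs) < length xs" using len_le[OF less.prems] by simp
    then have "\<not> distinct (rl xs)" using distinct_reduced[OF less.prems] by auto
    then obtain ys where ys: "set ys \<subseteq> set xs" "length ys + 2 = length xs" "wprod ys = wprod xs"
      using exists_del[OF less.prems] by auto
    have "even (length ys) = even (len (wprod ys))" using less.hyps[of ys] ys less.prems by auto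
    moreover have "even (length xs) = even (length ys)" using ys(2) by (metis add_2_eq_Suc' even_add even_numeral)
    ultimately show ?thesis using ys by simp
  qed
qed

lemma len_mult_le: assumes "a \<in> carrier G" "b \<in> carrier G" shows "len (a \<otimes> b) \<le> len a + len b"
proof -
  obtain xs where xs: "set xs \<subseteq> S" "length xs = len a" "wprod xs = a" using len_word[OF assms(1)] by blast
  obtain ys where ys: "set ys \<subseteq> S" "length ys = len b" "wprod ys = b" using len_word[OF assms(2)] by blast
  have "wprod (xs @ ys) = a \<otimes> b" using xs ys by (simp add: wprod_appendS)
  then show ?thesis using len_le[of "xs @ ys"] xs ys by auto
qed

lemma len_S: "s \<in> S \<Longrightarrow> len s \<le> 1"
  using len_le[of "[s]"] S_in by simp

lemma len_mult_S_ne: assumes "w \<in> carrier G" "s \<in> S" shows "len (w \<otimes> s) \<noteq> len w"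
proof -
  obtain xs where xs: "set xs \<subseteq> S" "length xs = len w" "wprod xs = w" using len_word[OF assms(1)] by blast
  have "wprod (xs @ [s]) = w \<otimes> s" using xs assms S_in by (simp add: wprod_appendS)
  then have "even (Suc (len w)) = even (len (w \<otimes> s))" using len_parity[of "xs @ [s]"] xs assms by simp
  then show ?thesis by auto
qed

lemma len_mult_S_le: assumes "w \<in> carrier G" "s \<in> S" shows "len (w \<otimes> s) \<le> Suc (len w)"
  using len_mult_le[OF assms(1), of s] assms len_S S_in by fastforce

lemma J_word: assumes J: "J \<subseteq> S" and w: "w \<in> generate G J"
  obtains xs where "set xs \<subseteq> J" "length xs = len w" "wprod xs = w"
proof -
  have "w \<in> wprod ` lists J" using gen_words[OF J] w by simp
  then have ex: "\<exists>n xs. set xs \<subseteq> J \<and> length xs = n \<and> wprod xs = w" by auto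
  define n0 where "n0 = (LEAST n. \<exists>xs. set xs \<subseteq> J \<and> length xs = n \<and> wprod xs = w)"
  obtain xs where xs: "set xs \<subseteq> J" "length xs = n0" "wprod xs = w"
    using LeastI_ex[OF ex] n0_def by auto
  have xsS: "set xs \<subseteq> S" using xs J by auto
  have "len w = length xs"
  proof (rule ccontr)
    assume "len w \<noteq> length xs"
    then have "len (wprod xs) < length xs" using len_le[OF xsS] xs by simp
    then have "\<not> distinct (rl xs)" using distinct_reduced[OF xsS] by auto
    then obtain ys where ys: "set ys \<subseteq> set xs" "length ys + 2 = length xs" "wprod ys = wprod xs"
      using exists_del[OF xsS] by auto
    have "n0 \<le> length ys" unfolding n0_def
      by (rule Least_le) (use ys xs in auto)
    then show False using ys xs by simp
  qed
  then show ?thesis using that xs by simp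
qed

lemma subgroup_J: "J \<subseteq> S \<Longrightarrow> subgroup (generate G J) G"
  using generate_is_subgroup S_carr by auto

lemma coset_len_word:
  assumes J: "J \<subseteq> S" and d: "d \<in> carrier G"
    and mind: "\<And>a. a \<in> generate G J \<Longrightarrow> len d \<le> len (a \<otimes> d)"
  shows "set as \<subseteq> J \<Longrightarrow> len (wprod as) = length as \<Longrightarrow> len (wprod as \<otimes> d) = length as + len d"
proof (induct as)
  case Nil then show ?case using d by simp
next
  case (Cons x as)
  have xS: "x \<in> S" and asJ: "set as \<subseteq> J" using Cons.prems J by auto
  have asS: "set as \<subseteq> S" using asJ J by auto
  have xc: "x \<in> carrier G" using xS S_in by auto
  define a where "a = wprod as"
  have a: "a \<in> carrier G" using asS a_def by simp
  have la1: "len a \<le> length as" using len_le[OF asS] a_def by simp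
  have "Suc (length as) = len (x \<otimes> a)" using Cons.prems(2) a_def by simp
  also have "\<dots> \<le> len x + len a" using len_mult_le[OF xc a] .
  also have "\<dots> \<le> 1 + len a" using len_S[OF xS] by simp
  finally have la: "len a = length as" using la1 by simp
  have IH: "len (a \<otimes> d) = length as + len d" using Cons.hyps[OF asJ] la a_def by simp
  obtain ds where ds: "set ds \<subseteq> S" "length ds = len d" "wprod ds = d" using len_word[OF d] by blast
  define zs where "zs = as @ ds"
  have zsS: "set zs \<subseteq> S" using asS ds zs_def by simp
  have wz: "wprod zs = a \<otimes> d" using asS ds zs_def a_def by (simp add: wprod_appendS)
  have lz: "len (wprod zs) = length zs" using wz IH ds zs_def by simp
  have dz: "distinct (rl zs)" using reduced_distinct[OF zsS lz] .
  have ad: "a \<otimes> d \<in> carrier G" using a d by simp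
  have ne: "len (x \<otimes> (a \<otimes> d)) \<noteq> len (a \<otimes> d)"
  proof -
    have "inv (x \<otimes> (a \<otimes> d)) \<in> carrier G" using xc ad by simp
    have "len (inv (a \<otimes> d) \<otimes> x) \<noteq> len (inv (a \<otimes> d))" using len_mult_S_ne[OF _ xS] ad by simp
    show ?thesis
    proof
      assume h: "len (x \<otimes> (a \<otimes> d)) = len (a \<otimes> d)"
      obtain us where us: "set us \<subseteq> S" "length us = len (a \<otimes> d)" "wprod us = a \<otimes> d"
        using len_word[OF ad] by blast
      have "wprod (x # us) = x \<otimes> (a \<otimes> d)" using us by simp
      then have "even (Suc (len (a \<otimes> d))) = even (len (x \<otimes> (a \<otimes> d)))"
        using len_parity[of "x # us"] us xS by simp
      then show False using h by simp
    qed
  qed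
  have le: "len (x \<otimes> (a \<otimes> d)) \<le> Suc (len (a \<otimes> d))"
    using len_mult_le[OF xc ad] len_S[OF xS] by simp
  show ?case
  proof (rule ccontr)
    assume "len (wprod (x # as) \<otimes> d) \<noteq> length (x # as) + len d"
    then have "len (x \<otimes> (a \<otimes> d)) \<noteq> Suc (len (a \<otimes> d))" using IH a_def xc a d by (simp add: m_assoc)
    then have lt: "len (wprod (x # zs)) < length (x # zs)" using ne le wz lz by simp
    have "\<not> distinct (rl (x # zs))"
      using distinct_reduced[of "x # zs"] lt zsS xS by auto
    then have "inv (wprod zs) \<otimes> x \<otimes> wprod zs \<in> set (rl zs)" using dz by simp
    then obtain j where j: "j < length zs" "rl zs ! j = inv (wprod zs) \<otimes> x \<otimes> wprod zs"
      by (auto simp: in_set_conv_nth)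
    have e: "x \<otimes> (a \<otimes> d) = wprod (take j zs @ drop (Suc j) zs)"
      using del_step[OF zsS xS j(1)] j(2) wz by simp
    show False
    proof (cases "j < length as")
      case True
      define as' where "as' = take j as @ drop (Suc j) as"
      have as'S: "set as' \<subseteq> S" using asS as'_def set_take_subset[of j as] set_drop_subset[of "Suc j" as] by auto
      have "take j zs @ drop (Suc j) zs = as' @ ds" using True zs_def as'_def by simp
      then have "x \<otimes> a \<otimes> d = wprod as' \<otimes> d" using e as'S ds xc a d by (simp add: wprod_appendS m_assoc)
      then have "x \<otimes> a = wprod as'" using xc a d as'S r_cancel[of d "x \<otimes> a" "wprod as'"] by simp
      then have "len (x \<otimes> a) \<le> length as'" using len_le[OF as'S] by simp
      moreover have "length as' < Suc (length as)" using True as'_def by simp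
      ultimately show False using Cons.prems(2) a_def by simp
    next
      case False
      define k where "k = j - length as"
      define ds' where "ds' = take k ds @ drop (Suc k) ds"
      have k: "k < length ds" using False j(1) zs_def k_def by simp
      have ds'S: "set ds' \<subseteq> S" using ds ds'_def set_take_subset[of k ds] set_drop_subset[of "Suc k" ds] by auto
      have "take j zs @ drop (Suc j) zs = as @ ds'" using False zs_def ds'_def k_def
        by (simp add: Suc_diff_le)
      then have e2: "x \<otimes> a \<otimes> d = a \<otimes> wprod ds'" using e asS ds'S xc a d by (simp add: wprod_appendS m_assoc a_def)
      have ds'c: "wprod ds' \<in> carrier G" using ds'S by simp
      have "inv a \<otimes> x \<otimes> a \<otimes> d = inv a \<otimes> (x \<otimes> a \<otimes> d)" using a xc d by (simp add: m_assoc)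
      also have "\<dots> = inv a \<otimes> (a \<otimes> wprod ds')" using e2 by simp
      also have "\<dots> = wprod ds'" using a ds'c by (simp add: m_assoc[symmetric])
      finally have "inv a \<otimes> x \<otimes> a \<otimes> d = wprod ds'" .
      moreover have "inv a \<otimes> x \<otimes> a \<in> generate G J"
      proof -
        interpret sg: subgroup "generate G J" G using subgroup_J[OF J] .
        have aJ: "a \<in> generate G J" using gen_words[OF J] asJ a_def by auto
        have xJ: "x \<in> generate G J" using Cons.prems(1) by (auto intro: generate.incl)
        show ?thesis using aJ xJ by (simp add: sg.m_closed sg.m_inv_closed)
      qed
      ultimately have "len d \<le> len (wprod ds')" using mind[of "inv a \<otimes> x \<otimes> a"] by simp
      moreover have "len (wprod ds') \<le> length ds'" using len_le[OF ds'S] .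
      moreover have "length ds' < len d" using k ds ds'_def by simp
      ultimately show False by simp
    qed
  qed
qed

lemma coset_len:
  assumes J: "J \<subseteq> S" and d: "d \<in> carrier G"
    and mind: "\<And>a. a \<in> generate G J \<Longrightarrow> len d \<le> len (a \<otimes> d)"
    and a: "a \<in> generate G J"
  shows "len (a \<otimes> d) = len a + len d"
proof -
  obtain as where as: "set as \<subseteq> J" "length as = len a" "wprod as = a" using J_word[OF J a] by blast
  show ?thesis using coset_len_word[OF J d mind as(1)] as by simp
qed

end


lemma cis_sq_key:
  fixes th :: real
  shows "(cis (2*th) + 1)^2 = (2 * complex_of_real (cos th))^2 * cis (2*th)"
proof -
  define u where "u = cis th"
  define v where "v = cis (- th)"
  have uv: "u * v = 1" unfolding u_def v_def by (simp add: cis_mult)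
  have s: "u + v = 2 * complex_of_real (cos th)"
    unfolding u_def v_def by (simp add: complex_eq_iff)
  have l: "cis (2*th) = u * u" unfolding u_def by (simp add: cis_mult)
  have "cis (2*th) + 1 = u * (u + v)" using uv l by (simp add: algebra_simps)
  then have "(cis (2*th) + 1)^2 = u*u * (u+v)^2" by (simp add: power2_eq_square algebra_simps)
  then show ?thesis using s l by (simp add: algebra_simps)
qed

lemma pair_seq:
  fixes x y :: "nat \<Rightarrow> real" and c :: real and n :: nat
  assumes n: "n \<ge> 3" and c: "c = cos (pi / n)"
    and xs: "\<And>k. x (Suc k) = - x k - 2 * c * y k"
    and ys: "\<And>k. y (Suc k) = 2 * c * x k + (4 * c^2 - 1) * y k"
  shows "2 * complex_of_real c * x k + (cis (2*pi/n) + 1) * y k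
         = cis (2*pi/n) ^ k * (2 * complex_of_real c * x 0 + (cis (2*pi/n) + 1) * y 0)"
proof (induct k)
  case 0 then show ?case by simp
next
  case (Suc k)
  define l where "l = cis (2*pi/n)"
  have key: "(l + 1)^2 = (2 * complex_of_real c)^2 * l"
    using cis_sq_key[of "pi/n"] c l_def by (simp add: mult.commute)
  have "2 * complex_of_real c * x (Suc k) + (l + 1) * y (Suc k)
      = 2 * c * (- x k - 2 * c * y k) + (l + 1) * (2 * c * x k + (4 * c^2 - 1) * y k)"
    using xs ys by simp
  also have "\<dots> = l * (2 * complex_of_real c * x k + (l + 1) * y k)"
  proof -
    have "4 * complex_of_real c ^2 * l - l - 1 = l^2 + l"
      using key by (simp add: power2_eq_square algebra_simps)
    then have "(4 * complex_of_real c ^2 * l - l - 1) * y k = (l^2 + l) * y k" by simp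
    then show ?thesis by (simp add: power2_eq_square algebra_simps)
  qed
  finally show ?case using Suc l_def by simp
qed

lemma cis_pow_n: "n > 0 \<Longrightarrow> cis (2*pi/n) ^ n = 1"
  by (simp add: DeMoivre)

lemma cis_pow_ne1: fixes k n :: nat assumes "0 < k" "k < n" shows "cis (2*pi/n) ^ k \<noteq> 1"
proof
  assume h: "cis (2*pi/n) ^ k = 1"
  have "cos (real k * (2*pi/n)) = 1" using arg_cong[OF h, of Re] by (simp add: DeMoivre)
  then have "\<exists>N::int. real k * (2*pi/n) = of_int N * 2 * pi" using cos_one_2pi_int by blast
  then obtain N :: int where N: "real k * (2*pi/n) = of_int N * 2 * pi" by blast
  have "real k / n = N" using N assms by (simp add: field_simps)
  moreover have "0 < real k / n" "real k / n < 1" using assms by auto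
  ultimately show False by (metis of_int_0_less_iff of_int_less_1_iff not_less zero_less_one_class.zero_le_one
     int_one_le_iff_zero_less less_le_not_le)
qed

lemma pair_period:
  fixes x y :: "nat \<Rightarrow> real" and c :: real and n :: nat
  assumes n: "n \<ge> 3" and c: "c = cos (pi / n)"
    and xs: "\<And>k. x (Suc k) = - x k - 2 * c * y k"
    and ys: "\<And>k. y (Suc k) = 2 * c * x k + (4 * c^2 - 1) * y k"
  shows "x n = x 0 \<and> y n = y 0"
proof -
  have e: "2 * complex_of_real c * x n + (cis (2*pi/n) + 1) * y n
         = 2 * complex_of_real c * x 0 + (cis (2*pi/n) + 1) * y 0"
    using pair_seq[where x=x and y=y, OF n c xs ys, of n] cis_pow_n[of n] n by simp
  have s: "sin (2*pi/n) > 0" using n by (intro sin_gt_zero) (auto simp: field_simps)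
  have cp: "c > 0"
  proof -
    have "pi / n < pi / 2" using n by (intro divide_strict_left_mono) auto
    moreover have "0 < pi / n" using n by simp
    ultimately show ?thesis using c cos_gt_zero_pi[of "pi/n"] by linarith
  qed
  have "sin (2*pi/n) * y n = sin (2*pi/n) * y 0" using arg_cong[OF e, of Im] by simp
  then have y: "y n = y 0" using s by simp
  have "2 * c * x n + (cos (2*pi/n) + 1) * y n = 2 * c * x 0 + (cos (2*pi/n) + 1) * y 0"
    using arg_cong[OF e, of Re] by simp
  then have "x n = x 0" using y cp by simp
  then show ?thesis using y by simp
qed

lemma pair_nonper:
  fixes x y :: "nat \<Rightarrow> real" and c :: real and n :: nat
  assumes n: "n \<ge> 3" and c: "c = cos (pi / n)"
    and xs: "\<And>k. x (Suc k) = - x k - 2 * c * y k"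
    and ys: "\<And>k. y (Suc k) = 2 * c * x k + (4 * c^2 - 1) * y k"
    and x0: "x 0 = 1" and y0: "y 0 = 0" and k: "0 < k" "k < n"
  shows "\<not> (x k = 1 \<and> y k = 0)"
proof
  assume h: "x k = 1 \<and> y k = 0"
  have cp: "c > 0"
  proof -
    have "pi / n < pi / 2" using n by (intro divide_strict_left_mono) auto
    moreover have "0 < pi / n" using n by simp
    ultimately show ?thesis using c cos_gt_zero_pi[of "pi/n"] by linarith
  qed
  have "2 * complex_of_real c = cis (2*pi/n) ^ k * (2 * complex_of_real c)"
    using pair_seq[where x=x and y=y, OF n c xs ys, of k] h x0 y0 by simp
  then have "cis (2*pi/n) ^ k = 1" using cp by simp
  then show False using cis_pow_ne1[OF k] by simp
qed


context coxsys
begin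

definition Bm :: "'w \<Rightarrow> 'w \<Rightarrow> real" where
  "Bm r j = (if m r j = \<infinity> then -1 else - cos (pi / real (the_enat (m r j))))"

definition tau :: "'w \<Rightarrow> ('w \<Rightarrow> real) \<Rightarrow> ('w \<Rightarrow> real)" where
  "tau r f = (\<lambda>j. f j - 2 * Bm r j * f r)"

lemma Bm_diag: "r \<in> S \<Longrightarrow> Bm r r = 1"
  using m_diag by (simp add: Bm_def one_enat_def)

lemma Bm_sym: "r \<in> S \<Longrightarrow> j \<in> S \<Longrightarrow> Bm r j = Bm j r"
  using m_sym by (simp add: Bm_def)

lemma tau_invol: "r \<in> S \<Longrightarrow> tau r (tau r f) = f"
  using Bm_diag by (simp add: tau_def algebra_simps)

lemma tau_Bij: assumes "r \<in> S" shows "tau r \<in> Bij UNIV"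
proof -
  have "bij_betw (tau r) UNIV UNIV"
    by (rule bij_betw_byWitness[where f'="tau r"]) (use tau_invol[OF assms] in auto)
  then show ?thesis by (simp add: Bij_def)
qed

abbreviation "BV \<equiv> BijGroup (UNIV :: ('w \<Rightarrow> real) set)"

lemma BV_mult: "f \<in> Bij UNIV \<Longrightarrow> g \<in> Bij UNIV \<Longrightarrow> f \<otimes>\<^bsub>BV\<^esub> g = f \<circ> g"
  by (simp add: BijGroup_def compose_def restrict_UNIV comp_def)

lemma BV_one: "\<one>\<^bsub>BV\<^esub> = id"
  by (simp add: BijGroup_def restrict_UNIV id_def)

lemma BV_pow: assumes "f \<in> Bij UNIV" shows "f [^]\<^bsub>BV\<^esub> (k::nat) = f ^^ k"
proof (induct k)
  case 0 then show ?case by (simp add: BV_one)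
next
  case (Suc k)
  interpret B: group BV by (rule group_BijGroup)
  have "f [^]\<^bsub>BV\<^esub> Suc k = f [^]\<^bsub>BV\<^esub> k \<otimes>\<^bsub>BV\<^esub> f" by simp
  also have "\<dots> = f ^^ k \<circ> f" using Suc assms B.nat_pow_closed[of f k]
    by (simp add: BijGroup_def compose_def restrict_UNIV comp_def)
  finally show ?case by (simp only: funpow_Suc_right)
qed

lemma tau_pair_rel:
  assumes r: "r \<in> S" and r': "r' \<in> S" and rr: "r \<noteq> r'" and mn: "m r r' = enat n"
  defines "c \<equiv> cos (pi / real n)"
  defines "A \<equiv> tau r \<circ> tau r'"
  shows "n \<ge> 2" "Bm r r' = - c" "Bm r' r = - c"
    "\<And>f. A f r = - f r - 2 * c * f r'"
    "\<And>f. A f r' = 2 * c * f r + (4 * c^2 - 1) * f r'"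
    "\<And>f j. A f j = f j - 2 * Bm r j * f r + (- 2 * Bm r' j - 4 * c * Bm r j) * f r'"
proof -
  show n2: "n \<ge> 2" using m_ge2[OF r r' rr] mn by (simp add: numeral_eq_enat)
  show b1: "Bm r r' = - c" using mn by (simp add: Bm_def c_def)
  show b2: "Bm r' r = - c" using b1 Bm_sym r r' by simp
  have d: "Bm r r = 1" "Bm r' r' = 1" using Bm_diag r r' by auto
  show "\<And>f. A f r = - f r - 2 * c * f r'"
    using b1 b2 d by (simp add: A_def tau_def algebra_simps)
  show "\<And>f. A f r' = 2 * c * f r + (4 * c^2 - 1) * f r'"
    using b1 b2 d by (simp add: A_def tau_def algebra_simps power2_eq_square)
  show "\<And>f j. A f j = f j - 2 * Bm r j * f r + (- 2 * Bm r' j - 4 * c * Bm r j) * f r'"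
    using b1 b2 d by (simp add: A_def tau_def algebra_simps)
qed

end


context coxsys
begin

lemma tau_period:
  assumes r: "r \<in> S" and r': "r' \<in> S" and rr: "r \<noteq> r'" and mn: "m r r' = enat n"
  shows "(tau r \<circ> tau r') ^^ n = id"
proof -
  define c where "c = cos (pi / real n)"
  define A where "A = tau r \<circ> tau r'"
  note R = tau_pair_rel[OF r r' rr mn, folded c_def A_def]
  define al where "al j = - 2 * Bm r j" for j
  define be where "be j = - 2 * Bm r' j - 4 * c * Bm r j" for j
  have Aj: "A f j = f j + al j * f r + be j * f r'" for f j using R(6) by (simp add: al_def be_def)
  have lin: "\<exists>a b. \<forall>f j. (A ^^ k) f j = f j + a j * f r + b j * f r'" for k
  proof (induct k)
    case 0 show ?case by (intro exI[where x="\<lambda>_. 0"]) simp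
  next
    case (Suc k)
    then obtain a b where ab: "\<And>f j. (A ^^ k) f j = f j + a j * f r + b j * f r'" by blast
    show ?case
    proof (intro exI allI)
      fix f j
      show "(A ^^ Suc k) f j = f j + (\<lambda>j. a j + al j * (1 + a r) + be j * a r') j * f r
                    + (\<lambda>j. b j + al j * b r + be j * (1 + b r')) j * f r'"
        by (simp add: Aj ab algebra_simps)
    qed
  qed
  have per: "(A ^^ n) f r = f r \<and> (A ^^ n) f r' = f r'" for f
  proof (cases "n = 2")
    case True
    have c0: "c = 0" using True by (simp add: c_def)
    have "(A ^^ 2) f r = f r" "(A ^^ 2) f r' = f r'"
      using R(4) R(5) c0 by (simp_all add: numeral_2_eq_2)
    then show ?thesis using True by simp
  next
    case False
    then have n3: "n \<ge> 3" using R(1) by simp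
    have "(\<lambda>k. (A ^^ k) f r) n = (\<lambda>k. (A ^^ k) f r) 0 \<and> (\<lambda>k. (A ^^ k) f r') n = (\<lambda>k. (A ^^ k) f r') 0"
      by (rule pair_period[OF n3 c_def]) (simp_all add: R(4) R(5))
    then show ?thesis by simp
  qed
  obtain a b where ab: "\<And>f j. (A ^^ n) f j = f j + a j * f r + b j * f r'" using lin by blast
  have comm: "A ((A ^^ n) f) = (A ^^ n) (A f)" for f by (rule funpow_swap1)
  have key: "a j * f r + b j * f r' = a j * A f r + b j * A f r'" for f j
  proof -
    have C: "A ((A ^^ n) f) j = (A ^^ n) (A f) j" using comm by simp
    have L: "A ((A ^^ n) f) j = (A ^^ n) f j + al j * f r + be j * f r'"
      using Aj[of "(A ^^ n) f" j] per[of f] by simp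
    have Rr: "(A ^^ n) (A f) j = A f j + a j * A f r + b j * A f r'" using ab by simp
    have X: "(A ^^ n) f j = f j + a j * f r + b j * f r'" using ab by simp
    have Y: "A f j = f j + al j * f r + be j * f r'" using Aj by simp
    show ?thesis using C L Rr X Y by linarith
  qed
  have s: "sin (pi / real n) > 0" using R(1) by (intro sin_gt_zero) (auto simp: field_simps)
  have c2: "c^2 < 1" using s sin_cos_squared_add[of "pi / real n"] c_def
    by (smt (verit) zero_less_power)
  have ab0: "a j = 0 \<and> b j = 0" for j
  proof -
    define f1 :: "'w \<Rightarrow> real" where "f1 = (\<lambda>i. if i = r then 1 else 0)"
    define f2 :: "'w \<Rightarrow> real" where "f2 = (\<lambda>i. if i = r' then 1 else 0)"
    have v1: "f1 r = 1" "f1 r' = 0" using rr by (auto simp: f1_def)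
    have v2: "f2 r = 0" "f2 r' = 1" using rr by (auto simp: f2_def)
    have w1: "A f1 r = - 1" "A f1 r' = 2 * c" using R(4)[of f1] R(5)[of f1] v1 by simp_all
    have w2: "A f2 r = - 2 * c" "A f2 r' = 4 * c^2 - 1" using R(4)[of f2] R(5)[of f2] v2 by simp_all
    have "a j = a j * A f1 r + b j * A f1 r'" using key[of j f1] v1 by simp
    then have e1: "a j = a j * (- 1) + b j * (2 * c)" unfolding w1 .
    have "b j = a j * A f2 r + b j * A f2 r'" using key[of j f2] v2 by simp
    then have e2: "b j = a j * (- 2 * c) + b j * (4 * c^2 - 1)" unfolding w2 .
    have aa: "a j = c * b j" using e1 by simp
    have "(2 - 2 * c^2) * b j = 0" using e2 aa by (simp add: algebra_simps power2_eq_square)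
    then have "b j = 0" using c2 by simp
    then show ?thesis using aa by simp
  qed
  have "(A ^^ n) f = f" for f using ab ab0 by (simp add: fun_eq_iff)
  then show ?thesis by (simp add: A_def fun_eq_iff)
qed

lemma tau_nonper:
  assumes r: "r \<in> S" and r': "r' \<in> S" and rr: "r \<noteq> r'" and mn: "m r r' = enat n"
    and k: "0 < k" "k < n"
  shows "(tau r \<circ> tau r') ^^ k \<noteq> id"
proof
  assume h: "(tau r \<circ> tau r') ^^ k = id"
  define c where "c = cos (pi / real n)"
  define A where "A = tau r \<circ> tau r'"
  note R = tau_pair_rel[OF r r' rr mn, folded c_def A_def]
  define f1 :: "'w \<Rightarrow> real" where "f1 = (\<lambda>i. if i = r then 1 else 0)"
  have hk: "(A ^^ k) f1 = f1" using h A_def by simp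
  show False
  proof (cases "n = 2")
    case True
    then have "k = 1" using k by simp
    then have "A f1 = f1" using hk by simp
    then have "A f1 r = f1 r" by simp
    then show False using R(4)[of f1] rr True by (simp add: f1_def c_def)
  next
    case False
    then have n3: "n \<ge> 3" using R(1) by simp
    have "\<not> ((A ^^ k) f1 r = 1 \<and> (A ^^ k) f1 r' = 0)"
      by (rule pair_nonper[OF n3 c_def, where x="\<lambda>k. (A ^^ k) f1 r" and y="\<lambda>k. (A ^^ k) f1 r'"])
        (use k rr in \<open>simp_all add: R(4) R(5) f1_def\<close>)
    then show False using hk rr by (simp add: f1_def)
  qed
qed

end


context coxsys
begin

lemma tau_rel: "coxeter_relations_hold BV S m tau"
  unfolding coxeter_relations_hold_def
proof (intro ballI impI)
  fix r r' assume rr: "r \<in> S" "r' \<in> S" "m r r' \<noteq> \<infinity>"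
  then obtain n where n: "m r r' = enat n" by auto
  have tb: "tau r \<in> Bij UNIV" "tau r' \<in> Bij UNIV" using tau_Bij rr by auto
  have p: "tau r \<otimes>\<^bsub>BV\<^esub> tau r' = tau r \<circ> tau r'" using tb by (simp add: BV_mult)
  have pb: "tau r \<circ> tau r' \<in> Bij UNIV" using tb compose_Bij[of "tau r" UNIV "tau r'"]
    by (simp add: compose_def restrict_UNIV comp_def)
  show "(tau r \<otimes>\<^bsub>BV\<^esub> tau r') [^]\<^bsub>BV\<^esub> the_enat (m r r') = \<one>\<^bsub>BV\<^esub>"
  proof (cases "r = r'")
    case True
    then have "n = 1" using n m_diag rr by (simp add: one_enat_def)
    have "(tau r \<otimes>\<^bsub>BV\<^esub> tau r') [^]\<^bsub>BV\<^esub> (1::nat) = tau r \<circ> tau r'"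
      unfolding p BV_pow[OF pb] by simp
    moreover have "tau r \<circ> tau r' = id" using True tau_invol rr by (simp add: fun_eq_iff)
    ultimately show ?thesis using \<open>n = 1\<close> n by (simp add: BV_one)
  next
    case False
    then show ?thesis using n p BV_pow[OF pb] tau_period[OF rr(1,2) False n] by (simp add: BV_one)
  qed
qed

lemma st_pow_ne: assumes s: "s \<in> S" and t: "t \<in> S" and st: "s \<noteq> t" and mn: "m s t = enat n"
  and k: "0 < k" "k < n"
  shows "(s \<otimes> t) [^] k \<noteq> \<one>"
proof
  assume h: "(s \<otimes> t) [^] k = \<one>"
  have "\<exists>h \<in> hom G BV. \<forall>s\<in>S. h s = tau s"
    by (rule univ_any[OF group_BijGroup]) (use tau_Bij tau_rel in \<open>auto simp: BijGroup_def\<close>)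
  then obtain rh where rh: "rh \<in> hom G BV" "\<And>r. r \<in> S \<Longrightarrow> rh r = tau r" by blast
  interpret gh: group_hom G BV rh
    by (rule group_hom.intro, rule grp, rule group_BijGroup) (simp add: group_hom_axioms_def rh)
  have sc: "s \<otimes> t \<in> carrier G" using s t S_in by auto
  have tb: "tau s \<in> Bij UNIV" "tau t \<in> Bij UNIV" using tau_Bij s t by auto
  have pb: "tau s \<circ> tau t \<in> Bij UNIV" using tb compose_Bij[of "tau s" UNIV "tau t"]
    by (simp add: compose_def restrict_UNIV comp_def)
  have "rh ((s \<otimes> t) [^] k) = (rh (s \<otimes> t)) [^]\<^bsub>BV\<^esub> k" using gh.hom_nat_pow[OF sc] .
  also have "rh (s \<otimes> t) = tau s \<circ> tau t" using s t S_in rh tb by (simp add: BV_mult)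
  finally have "rh ((s \<otimes> t) [^] k) = (tau s \<circ> tau t) ^^ k" unfolding BV_pow[OF pb] .
  then have "(tau s \<circ> tau t) ^^ k = id" using h by (simp add: BV_one)
  then show False using tau_nonper[OF s t st mn k] by simp
qed

lemma ord_st: assumes s: "s \<in> S" and t: "t \<in> S" and st: "s \<noteq> t" and mn: "m s t = enat n"
  shows "ord (s \<otimes> t) = n"
proof -
  have sc: "s \<otimes> t \<in> carrier G" using s t S_in by auto
  have one: "(s \<otimes> t) [^] n = \<one>" using rel_st[OF s t] mn by simp
  have n0: "n > 0" using m_ge2[OF s t st] mn by (simp add: numeral_eq_enat)
  have "(s \<otimes> t) [^] k = \<one> \<longleftrightarrow> n dvd k" for k :: nat
  proof
    assume h: "(s \<otimes> t) [^] k = \<one>"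
    have "(s \<otimes> t) [^] k = (s \<otimes> t) [^] (n * (k div n)) \<otimes> (s \<otimes> t) [^] (k mod n)"
      using sc nat_pow_mult[OF sc] by (metis div_mult_mod_eq mult.commute)
    also have "(s \<otimes> t) [^] (n * (k div n)) = \<one>" using one sc by (simp add: nat_pow_pow[symmetric])
    finally have "(s \<otimes> t) [^] (k mod n) = \<one>" using h sc by simp
    then have "k mod n = 0" using st_pow_ne[OF s t st mn, of "k mod n"] n0 by (meson mod_less_divisor neq0_conv)
    then show "n dvd k" by auto
  next
    assume "n dvd k"
    then obtain q where "k = n * q" by auto
    then show "(s \<otimes> t) [^] k = \<one>" using one sc by (simp add: nat_pow_pow[symmetric])
  qed
  then show ?thesis using ord_unique[OF sc] by blast
qed

lemma pow_conj: assumes "g \<in> carrier G" "x \<in> carrier G"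
  shows "(g \<otimes> x \<otimes> inv g) [^] (k::nat) = g \<otimes> x [^] k \<otimes> inv g"
proof (induct k)
  case 0 then show ?case using assms by simp
next
  case (Suc k)
  have "(g \<otimes> x \<otimes> inv g) [^] Suc k = (g \<otimes> x [^] k \<otimes> inv g) \<otimes> (g \<otimes> x \<otimes> inv g)"
    using Suc by simp
  also have "\<dots> = g \<otimes> (x [^] k \<otimes> x) \<otimes> inv g" using assms by (simp add: m_assoc[symmetric])
      (simp add: m_assoc)
  finally show ?case by simp
qed

lemma elem_order_conj: assumes "g \<in> carrier G" "x \<in> carrier G"
  shows "elem_order G (g \<otimes> x \<otimes> inv g) = elem_order G x"
proof -
  have e: "(g \<otimes> x \<otimes> inv g) [^] (k::nat) = \<one> \<longleftrightarrow> x [^] k = \<one>" for k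
  proof -
    have "(g \<otimes> x \<otimes> inv g) [^] k = g \<otimes> x [^] k \<otimes> inv g" by (rule pow_conj[OF assms])
    moreover have "g \<otimes> y \<otimes> inv g = \<one> \<longleftrightarrow> y = \<one>" if "y \<in> carrier G" for y
      using that assms by (metis inv_closed l_cancel_one m_assoc m_closed r_inv r_one inv_inv
          l_inv inv_equality)
    ultimately show ?thesis using assms by simp
  qed
  have c: "g \<otimes> x \<otimes> inv g \<in> carrier G" using assms by simp
  have "ord (g \<otimes> x \<otimes> inv g) = ord x"
    using ord_unique[OF c] pow_eq_id[OF assms(2)] e by auto
  then show ?thesis unfolding elem_order_def using e by simp
qed

lemma elem_order_st: assumes s: "s \<in> S" and t: "t \<in> S" and st: "s \<noteq> t" and mf: "m s t \<noteq> \<infinity>"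
  shows "elem_order G (s \<otimes> t) = m s t"
proof -
  obtain n where mn: "m s t = enat n" using mf by auto
  have n0: "n > 0" using m_ge2[OF s t st] mn by (simp add: numeral_eq_enat)
  have "(s \<otimes> t) [^] n = \<one>" using rel_st[OF s t] mn by simp
  then show ?thesis unfolding elem_order_def using ord_st[OF s t st mn] n0 mn by auto
qed

end


context coxsys
begin

lemma inv_lcancel: "a \<in> carrier G \<Longrightarrow> b \<in> carrier G \<Longrightarrow> inv a \<otimes> (a \<otimes> b) = b"
  by (simp add: m_assoc[symmetric])

lemma conj_gen:
  assumes J: "J \<subseteq> S" and J': "J' \<subseteq> S" and y: "y \<in> carrier G"
    and hyp: "\<And>r. r \<in> J' \<Longrightarrow> y \<otimes> r \<otimes> inv y \<in> generate G J"
  shows "z \<in> generate G J' \<Longrightarrow> y \<otimes> z \<otimes> inv y \<in> generate G J"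
proof (induct rule: generate.induct)
  interpret sg: subgroup "generate G J" G using subgroup_J[OF J] .
  case one then show ?case using y by simp
next
  interpret sg: subgroup "generate G J" G using subgroup_J[OF J] .
  case (incl h) then show ?case using hyp by simp
next
  interpret sg: subgroup "generate G J" G using subgroup_J[OF J] .
  case (inv h) then show ?case using hyp J' S_inv by auto
next
  interpret sg: subgroup "generate G J" G using subgroup_J[OF J] .
  case (eng h1 h2)
  have h: "h1 \<in> carrier G" "h2 \<in> carrier G"
    using eng(1,3) subgroup_J[OF J'] by (auto dest: subgroup.mem_carrier)
  have "y \<otimes> (h1 \<otimes> h2) \<otimes> inv y = (y \<otimes> h1 \<otimes> inv y) \<otimes> (y \<otimes> h2 \<otimes> inv y)"
    using h y by (simp add: m_assoc[symmetric]) (simp add: m_assoc)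
  then show ?case using eng(2,4) by (simp add: sg.m_closed)
qed

lemma main:
  assumes st: "s \<in> S" "t \<in> S" "s \<noteq> t" "m s t \<noteq> \<infinity>"
    and st': "s' \<in> S" "t' \<in> S" "s' \<noteq> t'"
    and x: "x \<in> carrier G" and q: "q \<in> carrier G"
    and a1: "a1 \<in> generate G {s, t}" "x \<otimes> s' \<otimes> inv x = q \<otimes> a1 \<otimes> inv q"
    and a2: "a2 \<in> generate G {s, t}" "x \<otimes> t' \<otimes> inv x = q \<otimes> a2 \<otimes> inv q"
  shows "m s t = elem_order G ((x \<otimes> s' \<otimes> inv x) \<otimes> (x \<otimes> t' \<otimes> inv x))"
proof -
  define J where "J = {s, t}"
  define J' where "J' = {s', t'}"
  have JS: "J \<subseteq> S" "J' \<subseteq> S" using st st' J_def J'_def by auto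
  interpret WJ: subgroup "generate G J" G using subgroup_J[OF JS(1)] .
  interpret WJ': subgroup "generate G J'" G using subgroup_J[OF JS(2)] .
  have sc: "s' \<in> carrier G" "t' \<in> carrier G" using st' S_in by auto
  define y where "y = inv q \<otimes> x"
  have yc: "y \<in> carrier G" using q x y_def by simp
  have ycj: "y \<otimes> r \<otimes> inv y = inv q \<otimes> (x \<otimes> r \<otimes> inv x) \<otimes> q" if "r \<in> carrier G" for r
    using q x that by (simp add: y_def m_assoc inv_mult_group)
  have qa: "inv q \<otimes> (q \<otimes> a \<otimes> inv q) \<otimes> q = a" if "a \<in> carrier G" for a
    using q that by (simp add: m_assoc[symmetric]) (simp add: m_assoc)
  have a1c: "a1 \<in> carrier G" "a2 \<in> carrier G" using a1(1) a2(1) WJ.mem_carrier J_def by auto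
  have hyp: "y \<otimes> r \<otimes> inv y \<in> generate G J" if "r \<in> J'" for r
  proof -
    have "r = s' \<or> r = t'" using that J'_def by auto
    then show ?thesis
    proof
      assume "r = s'" then show ?thesis using ycj[OF sc(1)] a1 qa[OF a1c(1)] J_def by simp
    next
      assume "r = t'" then show ?thesis using ycj[OF sc(2)] a2 qa[OF a1c(2)] J_def by simp
    qed
  qed
  note CG = conj_gen[OF JS yc hyp]
  define D where "D = {a \<otimes> y \<otimes> b | a b. a \<in> generate G J \<and> b \<in> generate G J'}"
  have yD: "y \<in> D" unfolding D_def using yc by (auto intro!: exI[where x=\<one>] WJ.one_closed WJ'.one_closed)
  have Dc: "D \<subseteq> carrier G" unfolding D_def using yc WJ.mem_carrier WJ'.mem_carrier by auto
  define n0 where "n0 = (LEAST k. \<exists>d \<in> D. len d = k)"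
  obtain d where d: "d \<in> D" "len d = n0" using LeastI_ex[of "\<lambda>k. \<exists>d \<in> D. len d = k"] yD n0_def by auto
  have dmin: "len d \<le> len d'" if "d' \<in> D" for d'
    using d(2) n0_def Least_le[of "\<lambda>k. \<exists>d \<in> D. len d = k" "len d'"] that by auto
  obtain a0 b0 where ab0: "d = a0 \<otimes> y \<otimes> b0" "a0 \<in> generate G J" "b0 \<in> generate G J'"
    using d(1) D_def by auto
  have a0c: "a0 \<in> carrier G" and b0c: "b0 \<in> carrier G" using ab0 WJ.mem_carrier WJ'.mem_carrier by auto
  have dc: "d \<in> carrier G" using d Dc by auto
  have mind: "len d \<le> len (a \<otimes> d)" if "a \<in> generate G J" for a
  proof -
    have ac: "a \<in> carrier G" using that WJ.mem_carrier by auto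
    have "a \<otimes> d = (a \<otimes> a0) \<otimes> y \<otimes> b0" using ab0 ac a0c yc b0c by (simp add: m_assoc)
    moreover have "a \<otimes> a0 \<in> generate G J" using that ab0(2) WJ.m_closed by simp
    ultimately have "a \<otimes> d \<in> D" using ab0(3) D_def by blast
    then show ?thesis using dmin by simp
  qed
  have refl_in: "d \<otimes> r \<otimes> inv d \<in> J" if r: "r \<in> J'" for r
  proof -
    have rS: "r \<in> S" using r JS by auto
    have rc: "r \<in> carrier G" using rS S_in by auto
    have rJ': "r \<in> generate G J'" using r by (rule generate.incl)
    have "d \<otimes> r = a0 \<otimes> y \<otimes> (b0 \<otimes> r)" using ab0 a0c yc b0c rc by (simp add: m_assoc)
    moreover have "b0 \<otimes> r \<in> generate G J'" using ab0(3) rJ' WJ'.m_closed by simp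
    ultimately have "d \<otimes> r \<in> D" using ab0(2) D_def by blast
    then have l1: "len d \<le> len (d \<otimes> r)" using dmin by simp
    have l2: "len (d \<otimes> r) \<noteq> len d" using len_mult_S_ne[OF dc rS] .
    have l3: "len (d \<otimes> r) \<le> Suc (len d)" using len_mult_S_le[OF dc rS] .
    have ldr: "len (d \<otimes> r) = Suc (len d)" using l1 l2 l3 by simp
    define c where "c = d \<otimes> r \<otimes> inv d"
    have cc: "c \<in> carrier G" using dc rc c_def by simp
    have cJ: "c \<in> generate G J"
    proof -
      have "b0 \<otimes> r \<otimes> inv b0 \<in> generate G J'"
        using ab0(3) rJ' by (simp add: WJ'.m_closed WJ'.m_inv_closed)
      then have i: "y \<otimes> (b0 \<otimes> r \<otimes> inv b0) \<otimes> inv y \<in> generate G J" using CG by blast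
      have "c = a0 \<otimes> (y \<otimes> (b0 \<otimes> r \<otimes> inv b0) \<otimes> inv y) \<otimes> inv a0"
        using ab0(1) a0c yc b0c rc by (simp add: c_def m_assoc inv_mult_group)
      then show ?thesis using i ab0(2) by (simp add: WJ.m_closed WJ.m_inv_closed)
    qed
    have "c \<otimes> d = d \<otimes> r" using dc rc by (simp add: c_def m_assoc)
    then have "len c + len d = Suc (len d)" using coset_len[OF JS(1) dc mind cJ] ldr by simp
    then have lc: "len c = 1" by simp
    obtain xs where xs: "set xs \<subseteq> J" "length xs = len c" "wprod xs = c" using J_word[OF JS(1) cJ] by blast
    then obtain j where "xs = [j]" using lc by (cases xs) auto
    then have "c = j" "j \<in> J" using xs JS S_in by auto
    then show ?thesis by (simp add: c_def)
  qed
  define r1 where "r1 = d \<otimes> s' \<otimes> inv d"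
  define r2 where "r2 = d \<otimes> t' \<otimes> inv d"
  have r1J: "r1 \<in> J" and r2J: "r2 \<in> J" using refl_in J'_def r1_def r2_def by auto
  have r12: "r1 \<noteq> r2"
  proof
    assume "r1 = r2"
    then have "inv d \<otimes> r1 \<otimes> d = inv d \<otimes> r2 \<otimes> d" by simp
    moreover have "inv d \<otimes> r1 \<otimes> d = s'" "inv d \<otimes> r2 \<otimes> d = t'" using dc sc
      by (simp_all add: r1_def r2_def m_assoc[symmetric]) (simp_all add: m_assoc)
    ultimately show False using st'(3) by simp
  qed
  define g where "g = x \<otimes> inv d"
  have gc: "g \<in> carrier G" using x dc g_def by simp
  have r1c: "r1 \<in> carrier G" "r2 \<in> carrier G" using r1_def r2_def dc sc by auto
  have "(x \<otimes> s' \<otimes> inv x) \<otimes> (x \<otimes> t' \<otimes> inv x) = g \<otimes> (r1 \<otimes> r2) \<otimes> inv g"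
    using x dc sc by (simp add: g_def r1_def r2_def m_assoc inv_mult_group inv_lcancel)
  then have "elem_order G ((x \<otimes> s' \<otimes> inv x) \<otimes> (x \<otimes> t' \<otimes> inv x)) = elem_order G (r1 \<otimes> r2)"
    using elem_order_conj[OF gc, of "r1 \<otimes> r2"] r1c by simp
  also have "\<dots> = m r1 r2"
    using elem_order_st r1J r2J r12 JS J_def st m_sym by auto
  also have "\<dots> = m s t" using r1J r2J r12 J_def m_sym st by auto
  finally show ?thesis by simp
qed

end

theorem lemma4p3:
  fixes G :: "('w, 'x) monoid_scheme" and S :: "'w set" and m :: "'w \<Rightarrow> 'w \<Rightarrow> enat"
  assumes "coxeter_system G S m"
    and "(s, t) \<in> coxM S m"
    and "(u, v) \<in> coxN G S m"
    and "q \<in> carrier G"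
    and "u \<in> conj_set G q (dihedral_sub G s t)"
    and "v \<in> conj_set G q (dihedral_sub G s t)"
  shows "m s t = elem_order G (u \<otimes>\<^bsub>G\<^esub> v)"
proof -
  interpret coxsys G S m by (rule coxsys.intro) (rule assms(1))
  have st: "s \<in> S" "t \<in> S" "s \<noteq> t" "m s t \<noteq> \<infinity>" using assms(2) by (auto simp: coxM_def)
  obtain x s' t' where xst: "x \<in> carrier G" "(s', t') \<in> coxM S m"
      "u = x \<otimes>\<^bsub>G\<^esub> s' \<otimes>\<^bsub>G\<^esub> inv\<^bsub>G\<^esub> x" "v = x \<otimes>\<^bsub>G\<^esub> t' \<otimes>\<^bsub>G\<^esub> inv\<^bsub>G\<^esub> x"
    using assms(3) unfolding coxN_def by blast
  have st': "s' \<in> S" "t' \<in> S" "s' \<noteq> t'" using xst(2) by (auto simp: coxM_def)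
  obtain a1 where a1: "a1 \<in> generate G {s, t}" "u = q \<otimes>\<^bsub>G\<^esub> a1 \<otimes>\<^bsub>G\<^esub> inv\<^bsub>G\<^esub> q"
    using assms(5) unfolding conj_set_def dihedral_sub_def by blast
  obtain a2 where a2: "a2 \<in> generate G {s, t}" "v = q \<otimes>\<^bsub>G\<^esub> a2 \<otimes>\<^bsub>G\<^esub> inv\<^bsub>G\<^esub> q"
    using assms(6) unfolding conj_set_def dihedral_sub_def by blast
  show ?thesis
    using main[OF st st' xst(1) assms(4) a1(1) _ a2(1)] xst a1 a2 by simp
qed


end
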